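(* Let $p$ be a prime, $q$ a power of $p$, and $F$ a field of characteristic $p$ containing $\mathbb{F}_q$. Let $L\in F[x]$ be a monic $q$-polynomial of $q$-degree $n\ge1$ such that $L(x)/x$ is irreducible over $F$ and the coefficient of $x$ in $L$ is $(-1)^n$. Then the Galois group $G$ of $L$ over $F$ is isomorphic to a subgroup of $SL(n,q)$ that acts transitively on the nonzero vectors of $\mathbb{F}_q^n$.
   Context: A $q$-polynomial over $F$ is a polynomial $\sum_{i=0}^n a_i x^{q^i}\in F[x]$; with $a_n\ne0$ its $q$-degree is $n$. The Galois group of $L$ over $F$ is the Galois group of a splitting field of $L$ over $F$; it acts $\mathbb{F}_q$-linearly on the $n$-dimensional $\mathbb{F}_q$-space of roots of $L$. *)

theory Defs
  imports "HOL-Computational_Algebra.Polynomial" "Jordan_Normal_Form.Determinant"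
begin

definition q_polynomial :: "nat \<Rightarrow> 'a::comm_ring_1 poly \<Rightarrow> bool" where
  "q_polynomial q L \<longleftrightarrow> (\<forall>i. coeff L i \<noteq> 0 \<longrightarrow> (\<exists>k. i = q ^ k))"

definition is_subfield :: "'k::field set \<Rightarrow> bool" where
  "is_subfield S \<longleftrightarrow> 0 \<in> S \<and> 1 \<in> S \<and>
     (\<forall>x\<in>S. \<forall>y\<in>S. x + y \<in> S \<and> x * y \<in> S) \<and>
     (\<forall>x\<in>S. - x \<in> S) \<and> (\<forall>x\<in>S. x \<noteq> 0 \<longrightarrow> inverse x \<in> S)"

definition splits :: "'k::field poly \<Rightarrow> bool" where
  "splits P \<longleftrightarrow> (\<exists>c xs. P = smult c (\<Prod>a\<leftarrow>xs. [:- a, 1:]))"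

definition ring_hom_fun :: "('a::ring_1 \<Rightarrow> 'b::ring_1) \<Rightarrow> bool" where
  "ring_hom_fun f \<longleftrightarrow> f 1 = 1 \<and> (\<forall>x y. f (x + y) = f x + f y) \<and> (\<forall>x y. f (x * y) = f x * f y)"

definition splitting_field :: "('f::field \<Rightarrow> 'k::field) \<Rightarrow> 'f poly \<Rightarrow> bool" where
  "splitting_field \<phi> P \<longleftrightarrow> ring_hom_fun \<phi> \<and> splits (map_poly \<phi> P) \<and>
     (\<forall>S. is_subfield S \<and> range \<phi> \<subseteq> S \<and> {a. poly (map_poly \<phi> P) a = 0} \<subseteq> S \<longrightarrow> S = UNIV)"

text \<open>The Galois group Aut(K/F) of the extension given by phi (group operation: composition).\<close>
definition galois_group :: "('f::field \<Rightarrow> 'k::field) \<Rightarrow> ('k \<Rightarrow> 'k) set" where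
  "galois_group \<phi> = {\<sigma>. bij \<sigma> \<and> ring_hom_fun \<sigma> \<and> (\<forall>c. \<sigma> (\<phi> c) = \<phi> c)}"

text \<open>The prime-power subfield F_q inside F: the roots of x^q - x.\<close>
definition Fq_set :: "nat \<Rightarrow> 'f::field set" where
  "Fq_set q = {x. x ^ q = x}"

text \<open>SL(n,q), as n x n matrices with entries in F_q (computed inside F) of determinant 1.\<close>
definition SL_mats :: "nat \<Rightarrow> nat \<Rightarrow> 'f::field mat set" where
  "SL_mats n q = {A \<in> carrier_mat n n. (\<forall>i<n. \<forall>j<n. A $$ (i, j) \<in> Fq_set q) \<and> det A = 1}"

definition nonzero_Fq_vecs :: "nat \<Rightarrow> nat \<Rightarrow> 'f::field vec set" where
  "nonzero_Fq_vecs n q = {v \<in> carrier_vec n. (\<forall>i<n. v $ i \<in> Fq_set q) \<and> v \<noteq> 0\<^sub>v n}"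

end

theory Submission
  imports Defs "Jordan_Normal_Form.Char_Poly" "HOL-Computational_Algebra.Primes"
begin

section \<open>Subfields, polynomials over subfields, partial homomorphisms\<close>

definition over :: "'k::field set \<Rightarrow> 'k poly \<Rightarrow> bool" where
  "over E g \<longleftrightarrow> (\<forall>i. coeff g i \<in> E)"

definition hom_on :: "'k::field set \<Rightarrow> ('k \<Rightarrow> 'k) \<Rightarrow> bool" where
  "hom_on E t \<longleftrightarrow> t 1 = 1 \<and> (\<forall>x\<in>E. \<forall>y\<in>E. t (x + y) = t x + t y \<and> t (x * y) = t x * t y)"

context fixes E :: "'k::field set" assumes sf: "is_subfield E"
begin

lemma sf_0[simp]: "0 \<in> E" and sf_1[simp]: "1 \<in> E"
  using sf unfolding is_subfield_def by auto

lemma sf_add[intro]: "x \<in> E \<Longrightarrow> y \<in> E \<Longrightarrow> x + y \<in> E"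
  and sf_mult[intro]: "x \<in> E \<Longrightarrow> y \<in> E \<Longrightarrow> x * y \<in> E"
  and sf_uminus[intro]: "x \<in> E \<Longrightarrow> - x \<in> E"
  using sf unfolding is_subfield_def by auto

lemma sf_inverse[intro]: "x \<in> E \<Longrightarrow> inverse x \<in> E"
  using sf unfolding is_subfield_def by (cases "x = 0") auto

lemma sf_diff[intro]: "x \<in> E \<Longrightarrow> y \<in> E \<Longrightarrow> x - y \<in> E"
  using sf_add[of x "- y"] sf_uminus[of y] by simp

lemma sf_divide[intro]: "x \<in> E \<Longrightarrow> y \<in> E \<Longrightarrow> x / y \<in> E"
  using sf_mult[of x "inverse y"] sf_inverse[of y] by (simp add: divide_inverse)

lemma sf_sum[intro]: "(\<And>i. i \<in> A \<Longrightarrow> f i \<in> E) \<Longrightarrow> sum f A \<in> E"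
  by (induction A rule: infinite_finite_induct) auto

lemma sf_power[intro]: "x \<in> E \<Longrightarrow> x ^ k \<in> E"
  by (induction k) auto

lemma over_0[simp]: "over E 0" and over_1[simp]: "over E 1"
  unfolding over_def by (auto simp: coeff_1)

lemma over_const[intro]: "c \<in> E \<Longrightarrow> over E [:c:]"
  unfolding over_def by (auto simp: coeff_pCons split: nat.splits)

lemma over_X[simp]: "over E [:0, 1:]"
  unfolding over_def by (auto simp: coeff_pCons split: nat.splits)

lemma over_monom[intro]: "c \<in> E \<Longrightarrow> over E (monom c k)"
  unfolding over_def by (auto simp: coeff_monom)

lemma over_add[intro]: "over E g \<Longrightarrow> over E h \<Longrightarrow> over E (g + h)"
  unfolding over_def by auto

lemma over_uminus[intro]: "over E g \<Longrightarrow> over E (- g)"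
  unfolding over_def by auto

lemma over_diff[intro]: "over E g \<Longrightarrow> over E h \<Longrightarrow> over E (g - h)"
  unfolding over_def by auto

lemma over_mult[intro]: "over E g \<Longrightarrow> over E h \<Longrightarrow> over E (g * h)"
  unfolding over_def coeff_mult by auto

lemma over_smult[intro]: "c \<in> E \<Longrightarrow> over E g \<Longrightarrow> over E (smult c g)"
  unfolding over_def by auto

lemma over_lead: "over E g \<Longrightarrow> lead_coeff g \<in> E"
  unfolding over_def by auto

lemma over_divide:
  assumes "over E a" "over E b" "b \<noteq> 0"
  shows "\<exists>Q Rm. over E Q \<and> over E Rm \<and> a = Q * b + Rm \<and> (Rm = 0 \<or> degree Rm < degree b)"
  using assms(1)
proof (induction "degree a" arbitrary: a rule: less_induct)
  case less
  show ?case
  proof (cases "a = 0 \<or> degree a < degree b")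
    case True
    then show ?thesis using less.prems by (intro exI[of _ 0] exI[of _ a]) auto
  next
    case False
    hence a0: "a \<noteq> 0" and dab: "degree b \<le> degree a" by auto
    define d where "d = degree a - degree b"
    define c where "c = lead_coeff a / lead_coeff b"
    have c0: "c \<noteq> 0" using a0 assms(3) by (simp add: c_def)
    have cE: "c \<in> E" unfolding c_def using over_lead[OF less.prems] over_lead[OF assms(2)] by auto
    define a' where "a' = a - monom c d * b"
    have oa': "over E a'" unfolding a'_def using less.prems assms(2) cE by auto
    have dm: "degree (monom c d) = d" using degree_monom_eq[OF c0] .
    have deg: "degree (monom c d * b) = degree a"
      using c0 assms(3) dab dm by (subst degree_mult_eq) (auto simp: d_def)
    have lc: "lead_coeff (monom c d * b) = lead_coeff a"
    proof -
      have "lead_coeff (monom c d * b) = lead_coeff (monom c d) * lead_coeff b" by (rule lead_coeff_mult)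
      also have "lead_coeff (monom c d) = c" using dm by simp
      also have "c * lead_coeff b = lead_coeff a" unfolding c_def using assms(3) by simp
      finally show ?thesis .
    qed
    have red: "a' = 0 \<or> degree a' < degree a"
    proof (cases "a' = 0")
      case False
      then show ?thesis unfolding a'_def using deg lc
        by (metis coeff_diff degree_diff_less diff_self leading_coeff_0_iff nat_neq_iff)
    qed simp
    show ?thesis
    proof (cases "a' = 0")
      case True
      hence "a = monom c d * b + 0" unfolding a'_def by simp
      then show ?thesis using cE over_monom[OF cE] by (intro exI[of _ "monom c d"] exI[of _ 0]) simp
    next
      case False
      with red have "degree a' < degree a" by simp
      from less.hyps[OF this oa'] obtain Q Rm where
        QR: "over E Q" "over E Rm" "a' = Q * b + Rm" "Rm = 0 \<or> degree Rm < degree b" by blast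
      have "a = (Q + monom c d) * b + Rm" using QR(3) unfolding a'_def by (simp add: algebra_simps)
      moreover have "over E (Q + monom c d)" using QR(1) over_monom[OF cE] by (rule over_add)
      ultimately show ?thesis using QR by (intro exI[of _ "Q + monom c d"] exI[of _ Rm]) simp
    qed
  qed
qed

lemma over_dvd:
  assumes "over E a" "over E b" "b \<noteq> 0" "b dvd a"
  shows "\<exists>Q. over E Q \<and> a = Q * b"
proof -
  obtain Q Rm where QR: "over E Q" "over E Rm" "a = Q * b + Rm" "Rm = 0 \<or> degree Rm < degree b"
    using over_divide[OF assms(1-3)] by blast
  have "b dvd Rm" using assms(4) QR(3) by (metis dvd_add_right_iff dvd_triv_right)
  hence "Rm = 0" using QR(4) assms(3) by (metis degree_0 dvd_imp_degree leD not_less_zero)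
  then show ?thesis using QR by auto
qed

end

context fixes E :: "'k::field set" and t :: "'k \<Rightarrow> 'k"
  assumes sf: "is_subfield E" and ho: "hom_on E t"
begin

lemma ho_1[simp]: "t 1 = 1" using ho unfolding hom_on_def by auto

lemma ho_add: "x \<in> E \<Longrightarrow> y \<in> E \<Longrightarrow> t (x + y) = t x + t y"
  and ho_mult: "x \<in> E \<Longrightarrow> y \<in> E \<Longrightarrow> t (x * y) = t x * t y"
  using ho unfolding hom_on_def by auto

lemma ho_0[simp]: "t 0 = 0"
proof -
  have "t 0 = t 0 + t 0" using ho_add[of 0 0] sf_0[OF sf] by simp
  thus ?thesis by (metis add_cancel_right_right)
qed

lemma ho_uminus: "x \<in> E \<Longrightarrow> t (- x) = - t x"
proof -
  assume x: "x \<in> E"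
  have "t x + t (- x) = 0" using ho_add[of x "- x"] sf_uminus[OF sf, of x] x by simp
  from minus_unique[OF this] show ?thesis by simp
qed

lemma ho_diff: "x \<in> E \<Longrightarrow> y \<in> E \<Longrightarrow> t (x - y) = t x - t y"
  using ho_add[of x "- y"] ho_uminus[of y] sf_uminus[OF sf, of y] by simp

lemma ho_sum: "(\<And>i. i \<in> A \<Longrightarrow> f i \<in> E) \<Longrightarrow> t (sum f A) = (\<Sum>i\<in>A. t (f i))"
proof (induction A rule: infinite_finite_induct)
  case (insert x F)
  then show ?case using ho_add[of "f x" "sum f F"] sf_sum[OF sf, of F f] by auto
qed auto

lemma ho_nonzero: "x \<in> E \<Longrightarrow> x \<noteq> 0 \<Longrightarrow> t x \<noteq> 0"
  using ho_mult[of x "inverse x"] sf_inverse[OF sf, of x] by auto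

lemma coeff_map_ho: "coeff (map_poly t g) i = t (coeff g i)"
  by (simp add: coeff_map_poly)

lemma map_ho_add: "over E g \<Longrightarrow> over E h \<Longrightarrow> map_poly t (g + h) = map_poly t g + map_poly t h"
  by (rule poly_eqI) (auto simp: coeff_map_ho over_def ho_add)

lemma map_ho_diff: "over E g \<Longrightarrow> over E h \<Longrightarrow> map_poly t (g - h) = map_poly t g - map_poly t h"
  by (rule poly_eqI) (auto simp: coeff_map_ho over_def ho_diff)

lemma map_ho_mult: "over E g \<Longrightarrow> over E h \<Longrightarrow> map_poly t (g * h) = map_poly t g * map_poly t h"
proof (rule poly_eqI)
  fix k assume g: "over E g" and h: "over E h"
  have "coeff (map_poly t (g * h)) k = t (\<Sum>i\<le>k. coeff g i * coeff h (k - i))"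
    by (simp add: coeff_map_ho coeff_mult)
  also have "\<dots> = (\<Sum>i\<le>k. t (coeff g i) * t (coeff h (k - i)))"
    using g h by (subst ho_sum) (auto simp: over_def ho_mult intro!: sf_mult[OF sf])
  also have "\<dots> = coeff (map_poly t g * map_poly t h) k"
    by (simp add: coeff_map_ho coeff_mult)
  finally show "coeff (map_poly t (g * h)) k = coeff (map_poly t g * map_poly t h) k" .
qed

lemma map_ho_const: "map_poly t [:c:] = [:t c:]"
  by (rule poly_eqI) (auto simp: coeff_map_ho coeff_pCons split: nat.splits)

lemma map_ho_X: "map_poly t [:0, 1:] = [:0, 1:]"
  by (rule poly_eqI) (auto simp: coeff_map_ho coeff_pCons split: nat.splits)

lemma lead_map_ho: "over E g \<Longrightarrow> lead_coeff g = 1 \<Longrightarrow> degree (map_poly t g) = degree g \<and> lead_coeff (map_poly t g) = 1"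
proof -
  assume "over E g" "lead_coeff g = 1"
  hence "coeff (map_poly t g) (degree g) = 1" by (simp add: coeff_map_ho)
  moreover have "degree (map_poly t g) \<le> degree g" by (rule degree_map_poly_le)
  ultimately show ?thesis by (metis le_antisym le_degree one_neq_zero)
qed

end

lemma min_poly_exists:
  fixes E :: "'k::field set"
  assumes sf: "is_subfield E" and "over E P0" "P0 \<noteq> 0" "poly P0 r = 0"
  shows "\<exists>m. over E m \<and> lead_coeff m = 1 \<and> poly m r = 0 \<and>
             (\<forall>h. over E h \<and> h \<noteq> 0 \<and> poly h r = 0 \<longrightarrow> degree m \<le> degree h)"
proof -
  let ?S = "\<lambda>h. over E h \<and> h \<noteq> 0 \<and> poly h r = 0"
  obtain h0 where h0: "?S h0" "\<forall>h. ?S h \<longrightarrow> degree h0 \<le> degree h"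
    using ex_has_least_nat[of ?S P0 degree] assms by blast
  define m where "m = smult (inverse (lead_coeff h0)) h0"
  have "lead_coeff h0 \<noteq> 0" using h0 by simp
  hence m: "over E m" "lead_coeff m = 1" "poly m r = 0" "degree m = degree h0"
    using h0 over_lead[OF sf, of h0] unfolding m_def
    by (auto intro!: over_smult[OF sf] sf_inverse[OF sf])
  have "\<forall>h. ?S h \<longrightarrow> degree m \<le> degree h" using h0(2) m(4) by simp
  thus ?thesis using m(1-3) by blast
qed

lemma adjoin:
  fixes E :: "'k::field set" and t :: "'k \<Rightarrow> 'k"
  assumes sf: "is_subfield E" and ho: "hom_on E t"
    and alg: "over E P0" "P0 \<noteq> 0" "poly P0 r = 0"
    and cond: "\<And>g. over E g \<Longrightarrow> poly g r = 0 \<Longrightarrow> poly (map_poly t g) s = 0"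
  shows "\<exists>E' t'. is_subfield E' \<and> E \<subseteq> E' \<and> r \<in> E' \<and> hom_on E' t' \<and>
                (\<forall>x\<in>E. t' x = t x) \<and> t' r = s"
proof -
  obtain m where m: "over E m" "lead_coeff m = 1" "poly m r = 0"
    and mmin: "\<And>h. over E h \<Longrightarrow> h \<noteq> 0 \<Longrightarrow> poly h r = 0 \<Longrightarrow> degree m \<le> degree h"
    using min_poly_exists[OF sf alg] by blast
  have m0: "m \<noteq> 0" using m(2) by auto
  define E' where "E' = {y. \<exists>g. over E g \<and> y = poly g r}"
  have memE': "poly g r \<in> E'" if "over E g" for g using that unfolding E'_def by blast
  define t' where "t' y = poly (map_poly t (SOME g. over E g \<and> poly g r = y)) s" for y
  have key: "t' (poly g r) = poly (map_poly t g) s" if g: "over E g" for g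
  proof -
    define g0 where "g0 = (SOME h. over E h \<and> poly h r = poly g r)"
    have g0: "over E g0 \<and> poly g0 r = poly g r"
      unfolding g0_def by (rule someI[of _ g]) (use g in auto)
    have "over E (g0 - g)" using g0 g over_diff[OF sf] by blast
    moreover have "poly (g0 - g) r = 0" using g0 by simp
    ultimately have "poly (map_poly t (g0 - g)) s = 0" by (rule cond)
    hence "poly (map_poly t g0) s = poly (map_poly t g) s"
      using map_ho_diff[OF sf ho, of g0 g] g0 g by simp
    thus ?thesis unfolding t'_def g0_def[symmetric] .
  qed
  have E'_cases: "\<And>y. y \<in> E' \<Longrightarrow> \<exists>g. over E g \<and> y = poly g r" unfolding E'_def by blast
  have mult_E': "y * z \<in> E'" if yE: "y \<in> E'" and zE: "z \<in> E'" for y z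
  proof -
    obtain g where g: "over E g" "y = poly g r" using E'_cases[OF yE] by blast
    obtain h where h: "over E h" "z = poly h r" using E'_cases[OF zE] by blast
    have gh: "over E (g * h)" using g(1) h(1) by (rule over_mult[OF sf])
    have "poly (g * h) r \<in> E'" by (rule memE'[OF gh])
    moreover have "poly (g * h) r = y * z" using g h by simp
    ultimately show ?thesis by metis
  qed
  have nz: "poly g r \<noteq> 0" if "over E g" "g \<noteq> 0" "degree g < degree m" for g
    using mmin[OF that(1,2)] that(3) by fastforce
  have inv: "\<exists>z\<in>E'. poly g r * z = 1"
    if "over E g" "g \<noteq> 0" "degree g < degree m" for g
    using that
  proof (induction "degree g" arbitrary: g rule: less_induct)
    case less
    show ?case
    proof (cases "degree g = 0")
      case True
      then obtain c where gc: "g = [:c:]" using degree0_coeffs[OF True] by blast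
      have cE: "c \<in> E" using less.prems(1) unfolding gc over_def by (metis coeff_pCons_0)
      have c0: "c \<noteq> 0" using less.prems(2) gc by simp
      have "poly [:inverse c:] r \<in> E'" by (rule memE'[OF over_const[OF sf sf_inverse[OF sf cE]]])
      thus ?thesis using c0 gc by (intro bexI[of _ "poly [:inverse c:] r"]) auto
    next
      case False
      obtain Q Rm where QR: "over E Q" "over E Rm" "m = Q * g + Rm" "Rm = 0 \<or> degree Rm < degree g"
        using over_divide[OF sf m(1) less.prems(1,2)] by blast
      have gr: "poly g r \<noteq> 0" using nz less.prems by blast
      show ?thesis
      proof (cases "Rm = 0")
        case True
        hence mQ: "m = Q * g" using QR by simp
        hence Q0: "Q \<noteq> 0" using m0 by auto
        have "poly Q r * poly g r = 0" using m(3) mQ by simp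
        hence Qr: "poly Q r = 0" using gr by simp
        have "degree m = degree Q + degree g" using mQ Q0 less.prems(2) by (simp add: degree_mult_eq)
        hence "degree Q < degree m" using False by simp
        with mmin[OF QR(1) Q0 Qr] show ?thesis by simp
      next
        case False
        hence dR: "degree Rm < degree g" using QR(4) by simp
        from less.hyps[OF dR QR(2) False] dR less.prems(3)
        obtain z' where z': "z' \<in> E'" "poly Rm r * z' = 1" by auto
        have "poly Q r * poly g r + poly Rm r = 0"
          using m(3) QR(3) by simp
        from minus_unique[OF this] have Rmeq: "poly Rm r = - (poly Q r * poly g r)" by simp
        have "poly g r * (poly (- Q) r * z') = (- (poly Q r * poly g r)) * z'"
          by (simp add: algebra_simps)
        hence "poly g r * (poly (- Q) r * z') = 1" using z'(2) Rmeq by (simp add: algebra_simps)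
        moreover have "poly (- Q) r * z' \<in> E'"
          by (rule mult_E'[OF memE'[OF over_uminus[OF sf QR(1)]] z'(1)])
        ultimately show ?thesis by blast
      qed
    qed
  qed
  have sfE': "is_subfield E'"
    unfolding is_subfield_def
  proof (intro conjI ballI impI)
    show "0 \<in> E'" using memE'[OF over_0[OF sf]] by simp
    show "1 \<in> E'" using memE'[OF over_1[OF sf]] by simp
    fix x assume "x \<in> E'"
    then obtain g where g: "over E g" "x = poly g r" using E'_cases[OF \<open>x \<in> E'\<close>] by blast
    have "over E (- g)" using g(1) by (rule over_uminus[OF sf])
    from memE'[OF this] show "- x \<in> E'" using g(2) by simp
    { assume x0: "x \<noteq> 0"
      obtain Q g' where Qg: "over E Q" "over E g'" "g = Q * m + g'" "g' = 0 \<or> degree g' < degree m"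
        using over_divide[OF sf g(1) m(1) m0] by blast
      have xg': "x = poly g' r" using g(2) Qg(3) m(3) by simp
      hence "g' \<noteq> 0" using x0 by auto
      hence "degree g' < degree m" using Qg(4) by simp
      from inv[OF Qg(2) \<open>g' \<noteq> 0\<close> this] xg' obtain z where "z \<in> E'" "x * z = 1" by blast
      hence "inverse x = z" by (metis inverse_unique)
      thus "inverse x \<in> E'" using \<open>z \<in> E'\<close> by simp }
    fix y assume "y \<in> E'"
    then obtain h where h: "over E h" "y = poly h r" using E'_cases[OF \<open>y \<in> E'\<close>] by blast
    have "over E (g + h)" using g(1) h(1) by (rule over_add[OF sf])
    from memE'[OF this] show "x + y \<in> E'" using g(2) h(2) by simp
    show "x * y \<in> E'" using mult_E' \<open>x \<in> E'\<close> \<open>y \<in> E'\<close> by blast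
  qed
  have EE': "E \<subseteq> E'"
  proof
    fix x assume "x \<in> E"
    from memE'[OF over_const[OF sf this]] show "x \<in> E'" by simp
  qed
  have rE': "r \<in> E'" using memE'[OF over_X[OF sf]] by simp
  have hoE': "hom_on E' t'"
    unfolding hom_on_def
  proof (intro conjI ballI)
    have "t' (poly 1 r) = poly (map_poly t 1) s" using key[OF over_1[OF sf]] .
    also have "map_poly t 1 = 1" using map_ho_const[OF sf ho, of 1] by (simp add: one_pCons ho_1[OF sf ho])
    finally show "t' 1 = 1" by simp
    fix x y assume "x \<in> E'" "y \<in> E'"
    obtain g where g: "over E g" "x = poly g r" using E'_cases[OF \<open>x \<in> E'\<close>] by blast
    obtain h where h: "over E h" "y = poly h r" using E'_cases[OF \<open>y \<in> E'\<close>] by blast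
    show "t' (x + y) = t' x + t' y"
      using key[of "g + h"] key[OF g(1)] key[OF h(1)] g h over_add[OF sf g(1) h(1)]
        map_ho_add[OF sf ho g(1) h(1)] by simp
    show "t' (x * y) = t' x * t' y"
      using key[of "g * h"] key[OF g(1)] key[OF h(1)] g h over_mult[OF sf g(1) h(1)]
        map_ho_mult[OF sf ho g(1) h(1)] by simp
  qed
  have ext: "\<forall>x\<in>E. t' x = t x"
  proof
    fix x assume x: "x \<in> E"
    have "t' (poly [:x:] r) = poly (map_poly t [:x:]) s" using key[OF over_const[OF sf x]] .
    thus "t' x = t x" using map_ho_const[OF sf ho, of x] by simp
  qed
  have "t' (poly [:0,1:] r) = poly (map_poly t [:0,1:]) s" using key[OF over_X[OF sf]] .
  hence tr: "t' r = s" using map_ho_X[OF sf ho] by simp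
  show ?thesis using sfE' EE' rE' hoE' ext tr by (intro exI[of _ E'] exI[of _ t']) simp
qed

lemma ring_hom_fun_field_hom:
  assumes "ring_hom_fun (f :: 'a::field \<Rightarrow> 'b::field)"
  shows "field_hom f"
proof -
  have f1: "f 1 = 1" and fa: "\<And>x y. f (x + y) = f x + f y" and fm: "\<And>x y. f (x * y) = f x * f y"
    using assms unfolding ring_hom_fun_def by auto
  have "f 0 = f 0 + f 0" using fa[of 0 0] by simp
  hence f0: "f 0 = 0" by (metis add_cancel_right_right)
  show ?thesis by unfold_locales (auto simp: f1 fa fm f0)
qed

lemma lead_coeff_prod_lin: "lead_coeff (\<Prod>a\<leftarrow>xs. [:- a, 1:]) = (1 :: 'a::idom)"
proof (induction xs)
  case (Cons a xs)
  have "lead_coeff ([:- a, 1:] * (\<Prod>a\<leftarrow>xs. [:- a, 1:])) = lead_coeff [:- a, 1:] * lead_coeff (\<Prod>a\<leftarrow>xs. [:- a, 1:])"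
    by (rule lead_coeff_mult)
  then show ?case using Cons by simp
qed simp

lemma degree_prod_lin: "degree (\<Prod>a\<leftarrow>xs. [:- a, 1:]) = length (xs :: 'a::idom list)"
proof (induction xs)
  case (Cons a xs)
  have "(\<Prod>a\<leftarrow>xs. [:- a, 1:]) \<noteq> 0" using lead_coeff_prod_lin[of xs] by auto
  have "degree ([:- a, 1:] * (\<Prod>a\<leftarrow>xs. [:- a, 1:])) = degree [:- a, 1:] + degree (\<Prod>a\<leftarrow>xs. [:- a, 1:])"
    by (rule degree_mult_eq) (use \<open>(\<Prod>a\<leftarrow>xs. [:- a, 1:]) \<noteq> 0\<close> in auto)
  then show ?case using Cons by simp
qed simp

lemma poly_prod_lin: "poly (\<Prod>a\<leftarrow>xs. [:- a, 1:]) x = 0 \<longleftrightarrow> x \<in> set (xs :: 'a::idom list)"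
  by (induction xs) auto

locale qsetup =
  fixes p q n :: nat and L :: "'f::field poly" and \<phi> :: "'f \<Rightarrow> 'k::field"
  assumes p: "prime p" and qk: "\<exists>k\<ge>1. q = p ^ k" and charF: "CHAR('f) = p"
    and cardFq: "card (Fq_set q :: 'f set) = q" and qpol: "q_polynomial q L" and n1: "n \<ge> 1"
    and degL: "degree L = q ^ n" and monL: "lead_coeff L = 1"
    and irr: "irreducible (L div [:0, 1:])" and c1: "coeff L 1 = (- 1) ^ n"
    and sp: "splitting_field \<phi> L"
begin

lemma rhf: "ring_hom_fun \<phi>" using sp unfolding splitting_field_def by auto

sublocale phi: field_hom \<phi> by (rule ring_hom_fun_field_hom[OF rhf])

lemma inj_phi: "inj \<phi>" by (rule phi.inj_f)

definition e where "e = (SOME k. k \<ge> 1 \<and> q = p ^ k)"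

lemma e: "e \<ge> 1" "q = p ^ e"
  using someI_ex[OF qk] unfolding e_def by auto

lemma p2: "p \<ge> 2" using p by (simp add: prime_ge_2_nat)

lemma q2: "q \<ge> 2"
proof -
  have "p ^ 1 \<le> p ^ e" using e(1) p2 by (intro power_increasing) auto
  thus ?thesis using e(2) p2 by simp
qed

lemma charK: "CHAR('k) = p"
proof (rule CHAR_eqI)
  have "of_nat p = \<phi> (of_nat p)" by (simp add: phi.hom_of_nat)
  also have "of_nat p = (0::'f)" using charF by (metis of_nat_CHAR)
  finally show "of_nat p = (0::'k)" by simp
  fix x assume "of_nat x = (0::'k)"
  hence "\<phi> (of_nat x) = 0" by (simp add: phi.hom_of_nat)
  hence "of_nat x = (0::'f)" by simp
  thus "p dvd x" using charF by (simp add: of_nat_eq_0_iff_char_dvd)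
qed

lemma primeK: "prime CHAR('k)" using charK p by simp

lemma qpow: "q ^ k = CHAR('k) ^ (e * k)" using e(2) charK by (simp add: power_mult)

lemma frob: "(x + y :: 'k) ^ (q ^ k) = x ^ (q ^ k) + y ^ (q ^ k)"
  by (rule freshmans_dream'[OF primeK qpow])

lemma frob_sum: "(sum f A :: 'k) ^ (q ^ k) = (\<Sum>i\<in>A. f i ^ (q ^ k))"
  by (rule freshmans_dream_sum'[OF primeK qpow])

lemma frob_q: "(x + y :: 'k) ^ q = x ^ q + y ^ q"
  using frob[of x y 1] by simp

lemma frob_sum_q: "(sum f A :: 'k) ^ q = (\<Sum>i\<in>A. f i ^ q)"
  using frob_sum[of f A 1] by simp

abbreviation FK :: "'k set" where "FK \<equiv> Fq_set q"

lemma FK_iff: "x \<in> FK \<longleftrightarrow> x ^ q = x" unfolding Fq_set_def by simp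

lemma FK_pow: "c \<in> FK \<Longrightarrow> c ^ (q ^ k) = c"
proof (induction k)
  case (Suc k)
  have "c ^ (q ^ Suc k) = (c ^ (q ^ k)) ^ q" by (simp add: power_mult[symmetric] mult.commute)
  thus ?case using Suc FK_iff by simp
qed simp

lemma FK_0[simp]: "0 \<in> FK" and FK_1[simp]: "1 \<in> FK"
  using q2 unfolding Fq_set_def by auto

lemma FK_add[intro]: "x \<in> FK \<Longrightarrow> y \<in> FK \<Longrightarrow> x + y \<in> FK"
  using frob_q unfolding Fq_set_def by simp

lemma FK_mult[intro]: "x \<in> FK \<Longrightarrow> y \<in> FK \<Longrightarrow> x * y \<in> FK"
  unfolding Fq_set_def by (simp add: power_mult_distrib)

lemma FK_uminus[intro]: "x \<in> FK \<Longrightarrow> - x \<in> FK"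
proof -
  assume x: "x \<in> FK"
  have "(x + - x) ^ q = x ^ q + (- x) ^ q" by (rule frob_q)
  moreover have "(x + - x) ^ q = 0" using q2 by simp
  ultimately have "x ^ q + (- x) ^ q = 0" by simp
  hence "- (x ^ q) = (- x) ^ q" by (rule minus_unique)
  hence "(- x) ^ q = - (x ^ q)" by simp
  thus ?thesis using x unfolding Fq_set_def by simp
qed

lemma FK_diff[intro]: "x \<in> FK \<Longrightarrow> y \<in> FK \<Longrightarrow> x - y \<in> FK"
  using FK_add[of x "- y"] FK_uminus[of y] by simp

lemma FK_inverse[intro]: "x \<in> FK \<Longrightarrow> inverse x \<in> FK"
  unfolding Fq_set_def by (simp add: power_inverse)

lemma FK_divide[intro]: "x \<in> FK \<Longrightarrow> y \<in> FK \<Longrightarrow> x / y \<in> FK"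
  using FK_mult[of x "inverse y"] FK_inverse[of y] by (simp add: divide_inverse)

lemma FK_sum[intro]: "(\<And>i. i \<in> A \<Longrightarrow> f i \<in> FK) \<Longrightarrow> sum f A \<in> FK"
  by (induction A rule: infinite_finite_induct) auto

lemma FK_image: "FK = \<phi> ` (Fq_set q :: 'f set)" and FK_finite: "finite FK" and FK_card: "card FK = q"
proof -
  have sub: "\<phi> ` (Fq_set q :: 'f set) \<subseteq> FK"
    unfolding Fq_set_def by (auto simp: phi.hom_power[symmetric])
  have cimg: "card (\<phi> ` (Fq_set q :: 'f set)) = q"
    using cardFq card_image[OF inj_on_subset[OF inj_phi]] by auto
  define g :: "'k poly" where "g = monom 1 q - [:0, 1:]"
  have cg: "coeff g q = 1" using q2 unfolding g_def by (simp add: coeff_pCons split: nat.splits)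
  hence g0: "g \<noteq> 0" by auto
  have dg: "degree g \<le> q" unfolding g_def
    by (rule order.trans[OF degree_diff_le_max]) (use q2 in \<open>auto simp: degree_monom_le\<close>)
  have gr: "{x. poly g x = 0} = FK" unfolding g_def Fq_set_def by (auto simp: poly_monom)
  have fin: "finite FK" using poly_roots_finite[OF g0] gr by simp
  have "card FK \<le> q" using card_poly_roots_bound[OF g0] gr dg by simp
  moreover have "q \<le> card FK" using card_mono[OF fin sub] cimg by simp
  ultimately have "card FK = q" by simp
  hence "\<phi> ` (Fq_set q :: 'f set) = FK" using card_subset_eq[OF fin sub] cimg by simp
  thus "FK = \<phi> ` (Fq_set q :: 'f set)" by simp
  show "finite FK" by (rule fin)
  show "card FK = q" using cimg \<open>\<phi> ` (Fq_set q :: 'f set) = FK\<close> by simp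
qed

lemma FK_range: "x \<in> FK \<Longrightarrow> x \<in> range \<phi>" using FK_image by auto

lemma FK_pre: "x \<in> FK \<Longrightarrow> inv_into UNIV \<phi> x \<in> (Fq_set q :: 'f set) \<and> \<phi> (inv_into UNIV \<phi> x) = x"
  using FK_image inj_phi by (auto simp: inv_f_f)

lemma qpoly_add:
  assumes "q_polynomial q (g :: 'k poly)"
  shows "poly g (x + y) = poly g x + poly g y"
proof -
  have "poly g (x + y) = (\<Sum>i\<le>degree g. coeff g i * (x + y) ^ i)" by (rule poly_altdef)
  also have "\<dots> = (\<Sum>i\<le>degree g. coeff g i * x ^ i + coeff g i * y ^ i)"
  proof (rule sum.cong)
    fix i assume "i \<in> {..degree g}"
    show "coeff g i * (x + y) ^ i = coeff g i * x ^ i + coeff g i * y ^ i"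
    proof (cases "coeff g i = 0")
      case False
      then obtain k where "i = q ^ k" using assms unfolding q_polynomial_def by blast
      then show ?thesis using frob[of x y k] by (simp add: algebra_simps)
    qed simp
  qed simp
  also have "\<dots> = poly g x + poly g y" by (simp add: sum.distrib poly_altdef)
  finally show ?thesis .
qed

lemma qpoly_smult:
  assumes "q_polynomial q (g :: 'k poly)" "c \<in> FK"
  shows "poly g (c * x) = c * poly g x"
proof -
  have "poly g (c * x) = (\<Sum>i\<le>degree g. coeff g i * (c * x) ^ i)" by (rule poly_altdef)
  also have "\<dots> = (\<Sum>i\<le>degree g. c * (coeff g i * x ^ i))"
  proof (rule sum.cong)
    fix i assume "i \<in> {..degree g}"
    show "coeff g i * (c * x) ^ i = c * (coeff g i * x ^ i)"
    proof (cases "coeff g i = 0")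
      case False
      then obtain k where "i = q ^ k" using assms unfolding q_polynomial_def by blast
      then show ?thesis using FK_pow[OF assms(2), of k] by (simp add: power_mult_distrib algebra_simps)
    qed simp
  qed simp
  also have "\<dots> = c * poly g x" by (simp add: sum_distrib_left poly_altdef)
  finally show ?thesis .
qed

lemma qpoly_0:
  assumes "q_polynomial q (g :: 'k poly)"
  shows "poly g 0 = 0"
proof -
  have "coeff g 0 = 0"
  proof (rule ccontr)
    assume "coeff g 0 \<noteq> 0"
    then obtain k where "0 = q ^ k" using assms unfolding q_polynomial_def by blast
    thus False using q2 by simp
  qed
  thus ?thesis by (simp add: poly_0_coeff_0)
qed

definition P :: "'k poly" where "P = map_poly \<phi> L"

lemma coeff_P: "coeff P i = \<phi> (coeff L i)" unfolding P_def by simp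

lemma qpolP: "q_polynomial q P"
  using qpol unfolding q_polynomial_def coeff_P by auto

lemma degP: "degree P = q ^ n" unfolding P_def using degL by simp

lemma lcP: "lead_coeff P = 1" using monL unfolding P_def by simp

lemma P0: "P \<noteq> 0" using lcP by auto

definition R :: "'k set" where "R = {a. poly P a = 0}"

lemma R_add: "x \<in> R \<Longrightarrow> y \<in> R \<Longrightarrow> x + y \<in> R"
  unfolding R_def using qpoly_add[OF qpolP] by simp

lemma R_smult: "c \<in> FK \<Longrightarrow> x \<in> R \<Longrightarrow> c * x \<in> R"
  unfolding R_def using qpoly_smult[OF qpolP] by simp

lemma R_0: "0 \<in> R" unfolding R_def using qpoly_0[OF qpolP] by simp

lemma R_sum: "(\<And>i. i \<in> A \<Longrightarrow> f i \<in> R) \<Longrightarrow> sum f A \<in> R"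
  by (induction A rule: infinite_finite_induct) (auto simp: R_0 R_add)

lemma splitP: "\<exists>xs. P = (\<Prod>a\<leftarrow>xs. [:- a, 1:])"
proof -
  obtain c xs where cxs: "P = smult c (\<Prod>a\<leftarrow>xs. [:- a, 1:])"
    using sp unfolding splitting_field_def splits_def P_def by blast
  have "lead_coeff P = c" unfolding cxs using lead_coeff_prod_lin[of xs] by simp
  hence "c = 1" using lcP by simp
  thus ?thesis using cxs by auto
qed

lemma pderivP: "pderiv P = [:\<phi> ((- 1) ^ n):]"
proof (rule poly_eqI)
  fix i
  show "coeff (pderiv P) i = coeff [:\<phi> ((- 1) ^ n):] i"
  proof (cases i)
    case 0
    then show ?thesis using c1 by (simp add: coeff_pderiv coeff_P)
  next
    case (Suc j)
    have "of_nat (Suc i) * coeff P (Suc i) = (0::'k)"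
    proof (cases "coeff P (Suc i) = 0")
      case False
      then obtain k where k: "Suc i = q ^ k" using qpolP unfolding q_polynomial_def by blast
      have "k \<noteq> 0" using k Suc by (cases k) auto
      hence "e * k \<noteq> 0" using e(1) by simp
      hence "CHAR('k) dvd CHAR('k) ^ (e * k)" by (simp add: dvd_power)
      hence "CHAR('k) dvd q ^ k" unfolding qpow[of k] .
      hence "of_nat (q ^ k) = (0::'k)" by (simp only: of_nat_eq_0_iff_char_dvd)
      then show ?thesis using k by simp
    qed simp
    then show ?thesis using Suc by (simp add: coeff_pderiv)
  qed
qed

lemma distinct_roots:
  assumes "P = (\<Prod>a\<leftarrow>xs. [:- a, 1:])"
  shows "distinct xs"
proof (rule ccontr)
  assume "\<not> distinct xs"
  then obtain as y bs cs where xs: "xs = as @ [y] @ bs @ [y] @ cs" using not_distinct_decomp by blast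
  define h where "h = [:- y, 1:]"
  define Q where "Q = (\<Prod>a\<leftarrow>as @ bs @ cs. [:- a, 1:])"
  have PQ: "P = h * h * Q" unfolding assms xs h_def Q_def
    by (simp del: mult_pCons_left mult_pCons_right add: mult_ac)
  have "pderiv P = h * h * pderiv Q + Q * (h * pderiv h + h * pderiv h)"
    unfolding PQ by (simp add: pderiv_mult algebra_simps)
  hence "poly (pderiv P) y = 0" unfolding h_def by simp
  moreover have "\<phi> ((- 1) ^ n) \<noteq> 0" by simp
  ultimately show False unfolding pderivP by simp
qed

lemma R_finite: "finite R" unfolding R_def using poly_roots_finite[OF P0] .

lemma R_card: "card R = q ^ n"
proof -
  obtain xs where xs: "P = (\<Prod>a\<leftarrow>xs. [:- a, 1:])" using splitP by blast
  have "R = set xs" unfolding R_def xs using poly_prod_lin by auto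
  hence "card R = length xs" using distinct_card[OF distinct_roots[OF xs]] by simp
  also have "length xs = degree P" unfolding xs by (rule degree_prod_lin[symmetric])
  also have "\<dots> = q ^ n" by (rule degP)
  finally show ?thesis .
qed

end

lemma dvd_prod_lin_root:
  fixes f :: "'k::field poly"
  assumes "f dvd (\<Prod>a\<leftarrow>xs. [:- a, 1:])" "degree f \<ge> 1"
  shows "\<exists>a\<in>set xs. poly f a = 0"
  using assms(1)
proof (induction xs)
  case Nil
  hence "f dvd 1" by simp
  hence "degree f = 0" by (simp add: poly_dvd_1)
  thus ?case using assms(2) by simp
next
  case (Cons a xs)
  show ?case
  proof (cases "poly f a = 0")
    case False
    have "f dvd [:- a, 1:] * (\<Prod>a\<leftarrow>xs. [:- a, 1:])" using Cons.prems by (simp only: list.map prod_list.Cons)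
    then obtain g where g: "[:- a, 1:] * (\<Prod>a\<leftarrow>xs. [:- a, 1:]) = f * g" by (rule dvdE)
    have "poly (f * g) a = 0" unfolding g[symmetric] by simp
    hence "poly g a = 0" using False by simp
    then obtain g' where g': "g = [:- a, 1:] * g'" using poly_eq_0_iff_dvd by (metis dvdE)
    have "[:- a, 1:] * (\<Prod>a\<leftarrow>xs. [:- a, 1:]) = [:- a, 1:] * (f * g')"
      unfolding g g' by (simp only: mult_ac)
    hence "(\<Prod>a\<leftarrow>xs. [:- a, 1:]) = f * g'" by (subst (asm) mult_left_cancel) simp_all
    hence "f dvd (\<Prod>a\<leftarrow>xs. [:- a, 1:])" by simp
    then show ?thesis using Cons.IH by auto
  qed simp
qed

lemma min_poly_dvd:
  fixes E :: "'k::field set"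
  assumes sf: "is_subfield E" and m: "over E m" "poly m r = 0" "m \<noteq> 0"
    and mmin: "\<And>h. over E h \<Longrightarrow> h \<noteq> 0 \<Longrightarrow> poly h r = 0 \<Longrightarrow> degree m \<le> degree h"
    and g: "over E g" "poly g r = 0"
  shows "\<exists>Q. over E Q \<and> g = Q * m"
proof -
  obtain Q Rm where QR: "over E Q" "over E Rm" "g = Q * m + Rm" "Rm = 0 \<or> degree Rm < degree m"
    using over_divide[OF sf g(1) m(1) m(3)] by blast
  have "poly Rm r = 0" using QR(3) g(2) m(2) by simp
  hence "Rm = 0" using mmin[OF QR(2)] QR(4) by fastforce
  thus ?thesis using QR by auto
qed

context qsetup
begin

sublocale mp: map_poly_inj_idom_hom \<phi> ..

lemma range_sf: "is_subfield (range \<phi>)"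
  unfolding is_subfield_def
proof (intro conjI ballI impI)
  show "0 \<in> range \<phi>" by (metis phi.hom_zero rangeI)
  show "1 \<in> range \<phi>" by (metis phi.hom_one rangeI)
  fix x assume "x \<in> range \<phi>"
  then obtain a where a: "x = \<phi> a" by blast
  show "- x \<in> range \<phi>" unfolding a by (metis phi.hom_uminus rangeI)
  show "x \<noteq> 0 \<Longrightarrow> inverse x \<in> range \<phi>" unfolding a by (metis phi.hom_inverse rangeI)
  fix y assume "y \<in> range \<phi>"
  then obtain b where b: "y = \<phi> b" by blast
  show "x + y \<in> range \<phi>" unfolding a b by (metis phi.hom_add rangeI)
  show "x * y \<in> range \<phi>" unfolding a b by (metis phi.hom_mult rangeI)
qed

lemma over_P: "range \<phi> \<subseteq> E \<Longrightarrow> over E P"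
  unfolding over_def coeff_P by auto

lemma map_P: "(\<And>c. t (\<phi> c) = \<phi> c) \<Longrightarrow> map_poly t P = P"
proof -
  assume t: "\<And>c. t (\<phi> c) = \<phi> c"
  have t0: "t 0 = 0" using t[of 0] by simp
  show ?thesis by (rule poly_eqI) (simp add: coeff_map_poly t0 coeff_P t)
qed

lemma splitting_univ: "is_subfield S \<Longrightarrow> range \<phi> \<subseteq> S \<Longrightarrow> R \<subseteq> S \<Longrightarrow> S = UNIV"
  using sp unfolding splitting_field_def R_def P_def by blast

lemma extend:
  "is_subfield E \<Longrightarrow> range \<phi> \<subseteq> E \<Longrightarrow> hom_on E t \<Longrightarrow> (\<forall>c. t (\<phi> c) = \<phi> c) \<Longrightarrow>
    \<exists>\<sigma>. ring_hom_fun \<sigma> \<and> (\<forall>x\<in>E. \<sigma> x = t x)"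
proof (induction "card (R - E)" arbitrary: E t rule: less_induct)
  case less
  note sf = less.prems(1) and rE = less.prems(2) and ho = less.prems(3) and fx = less.prems(4)
  show ?case
  proof (cases "R \<subseteq> E")
    case True
    hence "E = UNIV" using splitting_univ sf rE by blast
    hence "ring_hom_fun t" using ho unfolding hom_on_def ring_hom_fun_def by auto
    thus ?thesis by blast
  next
    case False
    then obtain r where r: "r \<in> R" "r \<notin> E" by blast
    have oP: "over E P" using over_P[OF rE] .
    have Pr: "poly P r = 0" using r unfolding R_def by simp
    obtain m where m: "over E m" "lead_coeff m = 1" "poly m r = 0"
      and mmin: "\<And>h. over E h \<Longrightarrow> h \<noteq> 0 \<Longrightarrow> poly h r = 0 \<Longrightarrow> degree m \<le> degree h"
      using min_poly_exists[OF sf oP P0 Pr] by blast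
    have m0: "m \<noteq> 0" using m(2) by auto
    have divm: "\<exists>Q. over E Q \<and> g = Q * m" if g: "over E g" "poly g r = 0" for g
      using min_poly_dvd[OF sf m(1) m(3) m0 mmin g] by blast
    obtain Q where Q: "over E Q" "P = Q * m" using divm[OF oP Pr] by blast
    have "P = map_poly t P" using map_P fx by simp
    also have "\<dots> = map_poly t Q * map_poly t m" unfolding Q(2) by (rule map_ho_mult[OF sf ho Q(1) m(1)])
    finally have Pdvd: "map_poly t m dvd P" by simp
    have dm: "degree (map_poly t m) = degree m" using lead_map_ho[OF sf ho m(1,2)] by simp
    have "degree m \<noteq> 0"
    proof
      assume "degree m = 0"
      then have "m = [:1:]" using m(2) by (metis degree0_coeffs lead_coeff_pCons(2) degree_pCons_0)
      thus False using m(3) by simp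
    qed
    hence dm1: "degree (map_poly t m) \<ge> 1" using dm by simp
    obtain xs where xs: "P = (\<Prod>a\<leftarrow>xs. [:- a, 1:])" using splitP by blast
    obtain s where s: "poly (map_poly t m) s = 0"
      using dvd_prod_lin_root[OF Pdvd[unfolded xs] dm1] by blast
    have cond: "poly (map_poly t g) s = 0" if gE: "over E g" and gr: "poly g r = 0" for g
    proof -
      obtain Q' where Q': "over E Q'" "g = Q' * m" using divm[OF gE gr] by blast
      have "map_poly t g = map_poly t Q' * map_poly t m" unfolding Q'(2) by (rule map_ho_mult[OF sf ho Q'(1) m(1)])
      thus ?thesis using s by simp
    qed
    obtain E' t' where E': "is_subfield E'" "E \<subseteq> E'" "r \<in> E'" "hom_on E' t'"
      "\<forall>x\<in>E. t' x = t x" "t' r = s"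
      using adjoin[OF sf ho oP P0 Pr cond] by blast
    have lt: "card (R - E') < card (R - E)"
      by (rule psubset_card_mono) (use R_finite E'(2,3) r in auto)
    have rE': "range \<phi> \<subseteq> E'" using rE E'(2) by blast
    have fix': "\<forall>c. t' (\<phi> c) = \<phi> c" using E'(5) rE fx by (metis rangeI subsetD)
    obtain \<sigma> where \<sigma>: "ring_hom_fun \<sigma>" "\<forall>x\<in>E'. \<sigma> x = t' x"
      using less.hyps[OF lt E'(1) rE' E'(4) fix'] by blast
    have "\<forall>x\<in>E. \<sigma> x = t x" using \<sigma>(2) E'(2,5) by auto
    thus ?thesis using \<sigma>(1) by blast
  qed
qed

lemma gal_fix_FK: "\<sigma> \<in> galois_group \<phi> \<Longrightarrow> x \<in> FK \<Longrightarrow> \<sigma> x = x"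
  using FK_range unfolding galois_group_def by auto

lemma gal_hom: "\<sigma> \<in> galois_group \<phi> \<Longrightarrow> field_hom \<sigma>"
  unfolding galois_group_def by (auto intro: ring_hom_fun_field_hom)

lemma gal_R: assumes "\<sigma> \<in> galois_group \<phi>" "x \<in> R" shows "\<sigma> x \<in> R"
proof -
  interpret s: field_hom \<sigma> by (rule gal_hom[OF assms(1)])
  have "map_poly \<sigma> P = P" by (rule map_P) (use assms(1) in \<open>auto simp: galois_group_def\<close>)
  hence "poly P (\<sigma> x) = \<sigma> (poly P x)" using s.poly_map_poly[of P x] by simp
  thus ?thesis using assms(2) unfolding R_def by simp
qed

lemma hom_gal:
  assumes "ring_hom_fun \<sigma>" "\<forall>c. \<sigma> (\<phi> c) = \<phi> c"
  shows "\<sigma> \<in> galois_group \<phi>"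
proof -
  interpret s: field_hom \<sigma> by (rule ring_hom_fun_field_hom[OF assms(1)])
  have inj: "inj \<sigma>" by (rule s.inj_f)
  have "map_poly \<sigma> P = P" by (rule map_P) (use assms(2) in auto)
  hence sub: "\<sigma> ` R \<subseteq> R" unfolding R_def using s.poly_map_poly by (auto, metis s.hom_zero)
  have "card (\<sigma> ` R) = card R" by (rule card_image[OF inj_on_subset[OF inj]]) simp
  hence imR: "\<sigma> ` R = R" using card_subset_eq[OF R_finite sub] by simp
  have "is_subfield (range \<sigma>)"
    unfolding is_subfield_def
  proof (intro conjI ballI impI)
    show "0 \<in> range \<sigma>" by (metis s.hom_zero rangeI)
    show "1 \<in> range \<sigma>" by (metis s.hom_one rangeI)
    fix x assume "x \<in> range \<sigma>"
    then obtain a where a: "x = \<sigma> a" by blast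
    show "- x \<in> range \<sigma>" unfolding a by (metis s.hom_uminus rangeI)
    show "x \<noteq> 0 \<Longrightarrow> inverse x \<in> range \<sigma>" unfolding a by (metis s.hom_inverse rangeI)
    fix y assume "y \<in> range \<sigma>"
    then obtain b where b: "y = \<sigma> b" by blast
    show "x + y \<in> range \<sigma>" unfolding a b by (metis s.hom_add rangeI)
    show "x * y \<in> range \<sigma>" unfolding a b by (metis s.hom_mult rangeI)
  qed
  moreover have "range \<phi> \<subseteq> range \<sigma>" using assms(2) by (metis image_subsetI rangeI)
  moreover have "R \<subseteq> range \<sigma>" using imR by auto
  ultimately have "range \<sigma> = UNIV" by (rule splitting_univ)
  hence "bij \<sigma>" using inj by (simp add: bij_def)
  thus ?thesis using assms unfolding galois_group_def by auto
qed

lemma transitive: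
  assumes a: "\<alpha> \<in> R" "\<alpha> \<noteq> 0" and b: "\<beta> \<in> R" "\<beta> \<noteq> 0"
  shows "\<exists>\<sigma>\<in>galois_group \<phi>. \<sigma> \<alpha> = \<beta>"
proof -
  define L' where "L' = L div [:0, 1:]"
  have "poly L 0 = 0"
  proof -
    have "\<phi> (poly L 0) = poly P (\<phi> 0)" unfolding P_def by simp
    also have "\<dots> = 0" using R_0 unfolding R_def by simp
    finally show ?thesis by simp
  qed
  hence "[:0, 1:] dvd L" using poly_eq_0_iff_dvd[of L 0] by simp
  hence LL': "L = [:0, 1:] * L'" unfolding L'_def by (rule dvd_mult_div_cancel[symmetric])
  define P' where "P' = map_poly \<phi> L'"
  have "map_poly \<phi> ([:0,1:] * L') = map_poly \<phi> [:0,1:] * map_poly \<phi> L'" by (rule mp.hom_mult)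
  moreover have "map_poly \<phi> [:0,1:] = [:0,1:]" by simp
  ultimately have PP': "P = [:0, 1:] * P'" unfolding P_def P'_def using LL' by simp
  have P'a: "poly P' \<alpha>  = 0" using a PP' unfolding R_def by simp
  have P'b: "poly P' \<beta>  = 0" using b PP' unfolding R_def by simp
  have irrL': "irreducible L'" using irr unfolding L'_def .
  have oP': "over (range \<phi>) P'" unfolding P'_def over_def by simp
  have P'0: "P' \<noteq> 0" using P'a P'_def irrL' by (metis irreducible_def mp.hom_0_iff)
  obtain m where m: "over (range \<phi>) m" "lead_coeff m = 1" "poly m \<alpha> = 0"
    and mmin: "\<And>h. over (range \<phi>) h \<Longrightarrow> h \<noteq> 0 \<Longrightarrow> poly h \<alpha> = 0 \<Longrightarrow> degree m \<le> degree h"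
    using min_poly_exists[OF range_sf oP' P'0 P'a] by blast
  have m0: "m \<noteq> 0" using m(2) by auto
  have pull: "\<exists>g0. g = map_poly \<phi> g0" if "over (range \<phi>) g" for g
  proof -
    define g0 where "g0 = map_poly (inv_into UNIV \<phi>) g"
    have i0: "inv_into UNIV \<phi> 0 = 0" by (metis phi.hom_zero inj_phi inv_f_f)
    have "g = map_poly \<phi> g0"
    proof (rule poly_eqI)
      fix i
      have "coeff g i \<in> range \<phi>" using that unfolding over_def by blast
      thus "coeff g i = coeff (map_poly \<phi> g0) i" unfolding g0_def by (simp add: coeff_map_poly i0 f_inv_into_f)
    qed
    thus ?thesis by blast
  qed
  obtain Q where Q: "over (range \<phi>) Q" "P' = Q * m"
    using min_poly_dvd[OF range_sf m(1) m(3) m0 mmin oP' P'a] by blast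
  obtain Q0 where Q0: "Q = map_poly \<phi> Q0" using pull[OF Q(1)] by blast
  obtain m1 where m1: "m = map_poly \<phi> m1" using pull[OF m(1)] by blast
  have "map_poly \<phi> L' = map_poly \<phi> (Q0 * m1)" using Q(2) unfolding P'_def Q0 m1 by (simp add: mp.hom_mult)
  hence L'Q: "L' = Q0 * m1" by simp
  have "degree m \<noteq> 0"
  proof
    assume "degree m = 0"
    then have "m = [:1:]" using m(2) by (metis degree0_coeffs lead_coeff_pCons(2) degree_pCons_0)
    thus False using m(3) by simp
  qed
  hence "\<not> m1 dvd 1" unfolding m1 by (auto simp: poly_dvd_1)
  hence "Q0 dvd 1" using irrL' L'Q unfolding irreducible_def by blast
  hence "degree Q = 0" unfolding Q0 by (simp add: poly_dvd_1)
  then obtain c where c: "Q = [:c:]" using degree0_coeffs by blast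
  have "c \<noteq> 0" using c Q(2) P'0 by auto
  hence mb: "poly m \<beta> = 0" using P'b Q(2) c by simp
  have cond: "poly (map_poly id g) \<beta> = 0" if g: "over (range \<phi>) g" "poly g \<alpha> = 0" for g
  proof -
    obtain Q' where "g = Q' * m" using min_poly_dvd[OF range_sf m(1) m(3) m0 mmin g] by blast
    thus ?thesis using mb by (simp add: map_poly_id)
  qed
  have hoid: "hom_on (range \<phi>) id" unfolding hom_on_def by simp
  obtain E' t' where E': "is_subfield E'" "range \<phi> \<subseteq> E'" "\<alpha> \<in> E'" "hom_on E' t'"
      "\<forall>x\<in>range \<phi>. t' x = id x" "t' \<alpha> = \<beta>"
    using adjoin[OF range_sf hoid over_P[OF order.refl] P0 _ cond] a unfolding R_def by blast
  have fix': "\<forall>c. t' (\<phi> c) = \<phi> c" using E'(5) by simp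
  obtain \<sigma> where \<sigma>: "ring_hom_fun \<sigma>" "\<forall>x\<in>E'. \<sigma> x = t' x"
    using extend[OF E'(1,2,4) fix'] by blast
  have "\<forall>c. \<sigma> (\<phi> c) = \<phi> c" using \<sigma>(2) E'(2) fix' by (metis rangeI subsetD)
  hence "\<sigma> \<in> galois_group \<phi>" by (rule hom_gal[OF \<sigma>(1)])
  moreover have "\<sigma> \<alpha> = \<beta>" using \<sigma>(2) E'(3,6) by simp
  ultimately show ?thesis by blast
qed

end

definition lin :: "nat \<Rightarrow> (nat \<Rightarrow> 'k::field) \<Rightarrow> (nat \<Rightarrow> 'k) \<Rightarrow> 'k" where
  "lin k c b = (\<Sum>i<k. c i * b i)"

context qsetup
begin

abbreviation CV :: "nat \<Rightarrow> (nat \<Rightarrow> 'k) set" where "CV k \<equiv> Pi\<^sub>E {..<k} (\<lambda>_. FK)"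

lemma card_CV: "card (CV k) = q ^ k"
  by (simp add: card_PiE FK_card)

lemma finite_CV: "finite (CV k)"
  by (simp add: finite_PiE FK_finite)

lemma lin_R: "(\<And>i. i < k \<Longrightarrow> b i \<in> R) \<Longrightarrow> c \<in> CV k \<Longrightarrow> lin k c b \<in> R"
  unfolding lin_def by (rule R_sum) (auto intro!: R_smult simp: PiE_mem)

lemma lin_cong: "(\<And>i. i < k \<Longrightarrow> c i = c' i) \<Longrightarrow> (\<And>i. i < k \<Longrightarrow> b i = b' i) \<Longrightarrow> lin k c b = lin k c' b'"
  unfolding lin_def by (rule sum.cong) auto

lemma basis_ex: "k \<le> n \<Longrightarrow> \<exists>b. (\<forall>i<k. b i \<in> R) \<and> inj_on (\<lambda>c. lin k c b) (CV k)"
proof (induction k)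
  case 0
  show ?case by (auto simp: inj_on_def)
next
  case (Suc k)
  then obtain b where b: "\<forall>i<k. b i \<in> R" "inj_on (\<lambda>c. lin k c b) (CV k)" by auto
  define S where "S = (\<lambda>c. lin k c b) ` CV k"
  have cS: "card S = q ^ k" unfolding S_def using card_image[OF b(2)] card_CV by simp
  have SR: "S \<subseteq> R" unfolding S_def using lin_R b(1) by blast
  have "q ^ k < q ^ n" using Suc.prems q2 by (intro power_strict_increasing) auto
  have "\<not> R \<subseteq> S"
  proof
    assume "R \<subseteq> S"
    hence "card R \<le> card S" by (rule card_mono[OF finite_subset[OF SR R_finite]])
    thus False using cS R_card \<open>q ^ k < q ^ n\<close> by simp
  qed
  then obtain r where r: "r \<in> R" "r \<notin> S" by blast
  define b' where "b' = b(k := r)"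
  have b'R: "\<forall>i<Suc k. b' i \<in> R" using b(1) r(1) unfolding b'_def by (auto simp: less_Suc_eq)
  have linS: "lin (Suc k) c b' = lin k c b + c k * r" for c
  proof -
    have "lin (Suc k) c b' = lin k c b' + c k * b' k" unfolding lin_def by simp
    moreover have "lin k c b' = lin k c b" by (rule lin_cong) (auto simp: b'_def)
    ultimately show ?thesis by (simp add: b'_def)
  qed
  have "inj_on (\<lambda>c. lin (Suc k) c b') (CV (Suc k))"
  proof (rule inj_onI)
    fix c d assume c: "c \<in> CV (Suc k)" and d: "d \<in> CV (Suc k)"
      and eq: "lin (Suc k) c b' = lin (Suc k) d b'"
    have cF: "\<And>i. i < Suc k \<Longrightarrow> c i \<in> FK" and dF: "\<And>i. i < Suc k \<Longrightarrow> d i \<in> FK"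
      using c d by (auto simp: PiE_mem)
    have eq2: "lin k c b + c k * r = lin k d b + d k * r" using eq linS by simp
    show "c = d"
    proof (cases "c k = d k")
      case False
      hence ne: "c k - d k \<noteq> 0" by simp
      define f where "f = restrict (\<lambda>i. (d i - c i) / (c k - d k)) {..<k}"
      have fC: "f \<in> CV k" unfolding f_def using cF dF by (auto intro!: FK_divide FK_diff)
      have "lin k f b = (\<Sum>i<k. (d i - c i) * b i) / (c k - d k)"
        unfolding lin_def f_def by (simp add: sum_divide_distrib)
      also have "(\<Sum>i<k. (d i - c i) * b i) = lin k d b - lin k c b"
        unfolding lin_def by (simp add: sum_subtractf left_diff_distrib)
      also have "lin k d b - lin k c b = (c k - d k) * r" using eq2 by (simp add: algebra_simps)
      finally have "lin k f b = r" using ne by simp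
      hence "r \<in> S" unfolding S_def using fC by blast
      thus ?thesis using r(2) by simp
    next
      case True
      hence "lin k c b = lin k d b" using eq2 by simp
      moreover have "lin k (restrict c {..<k}) b = lin k c b" by (rule lin_cong) simp_all
      moreover have "lin k (restrict d {..<k}) b = lin k d b" by (rule lin_cong) simp_all
      ultimately have eqr: "lin k (restrict c {..<k}) b = lin k (restrict d {..<k}) b" by simp
      have rc: "restrict c {..<k} \<in> CV k" unfolding restrict_PiE_iff using cF by simp
      have rd: "restrict d {..<k} \<in> CV k" unfolding restrict_PiE_iff using dF by simp
      have rr: "restrict c {..<k} = restrict d {..<k}" by (rule inj_onD[OF b(2) eqr rc rd])
      have lt: "c i = d i" if "i < k" for i using fun_cong[OF rr, of i] that by simp
      show "c = d"
      proof
        fix i show "c i = d i"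
        proof (cases "i < Suc k")
          case True thus ?thesis using lt \<open>c k = d k\<close> by (cases "i = k") auto
        next
          case False thus ?thesis using PiE_arb[OF c, of i] PiE_arb[OF d, of i] by simp
        qed
      qed
    qed
  qed
  with b'R show ?case by (intro exI[of _ b'] conjI)
qed

definition bas :: "nat \<Rightarrow> 'k" where
  "bas = (SOME b. (\<forall>i<n. b i \<in> R) \<and> inj_on (\<lambda>c. lin n c b) (CV n))"

lemma bas: "\<forall>i<n. bas i \<in> R" "inj_on (\<lambda>c. lin n c bas) (CV n)"
  using someI_ex[OF basis_ex[OF order.refl]] unfolding bas_def by auto

lemma bas_img: "(\<lambda>c. lin n c bas) ` CV n = R"
proof -
  have sub: "(\<lambda>c. lin n c bas) ` CV n \<subseteq> R" using lin_R bas(1) by blast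
  have "card ((\<lambda>c. lin n c bas) ` CV n) = card R" using card_image[OF bas(2)] card_CV R_card by simp
  thus ?thesis using card_subset_eq[OF R_finite sub] by simp
qed

definition coord :: "'k \<Rightarrow> nat \<Rightarrow> 'k" where
  "coord x = inv_into (CV n) (\<lambda>c. lin n c bas) x"

lemma coord: "x \<in> R \<Longrightarrow> coord x \<in> CV n \<and> lin n (coord x) bas = x"
proof -
  assume "x \<in> R"
  hence x: "x \<in> (\<lambda>c. lin n c bas) ` CV n" using bas_img by simp
  show ?thesis unfolding coord_def using inv_into_into[OF x] f_inv_into_f[OF x] by simp
qed

lemma coord_unique: "c \<in> CV n \<Longrightarrow> lin n c bas = x \<Longrightarrow> coord x = c"
  unfolding coord_def using bas(2) by (auto intro: inv_into_f_f)

lemma coord_FK: "x \<in> R \<Longrightarrow> i < n \<Longrightarrow> coord x i \<in> FK"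
  using coord by (auto simp: PiE_mem)

lemma bas_coord: "j < n \<Longrightarrow> coord (bas j) = (\<lambda>i. if i < n then (if i = j then 1 else 0) else undefined)"
proof -
  assume j: "j < n"
  let ?c = "(\<lambda>i. if i < n then (if i = j then 1 else 0) else undefined) :: nat \<Rightarrow> 'k"
  have "?c \<in> CV n" by (auto simp: PiE_iff extensional_def)
  moreover have "lin n ?c bas = bas j"
  proof -
    have "lin n ?c bas = (\<Sum>i<n. (if i = j then bas i else 0))" unfolding lin_def by (rule sum.cong) auto
    also have "\<dots> = bas j" using j by simp
    finally show ?thesis .
  qed
  ultimately show ?thesis by (rule coord_unique)
qed

end

context qsetup
begin

lemma qpoly_sum: "q_polynomial q (g :: 'k poly) \<Longrightarrow> poly g (sum f A) = (\<Sum>i\<in>A. poly g (f i))"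
  by (induction A rule: infinite_finite_induct) (auto simp: qpoly_0 qpoly_add)

lemma qpoly_lin: "q_polynomial q (g :: 'k poly) \<Longrightarrow> c \<in> CV n \<Longrightarrow>
    poly g (lin n c bas) = (\<Sum>i<n. c i * poly g (bas i))"
  unfolding lin_def by (subst qpoly_sum) (auto intro!: sum.cong qpoly_smult simp: PiE_mem)

definition Mo :: "'k mat" where "Mo = mat n n (\<lambda>(i, j). bas i ^ (q ^ j))"

lemma Mo_carrier: "Mo \<in> carrier_mat n n" unfolding Mo_def by simp

lemma q1: "1 < q" using q2 by simp

lemma Mo_det_nz: "det Mo \<noteq> 0"
proof
  assume "det Mo = 0"
  then obtain v where v: "v \<in> carrier_vec n" "v \<noteq> 0\<^sub>v n" "Mo *\<^sub>v v = 0\<^sub>v n"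
    using det_0_iff_vec_prod_zero_field[OF Mo_carrier] by blast
  define g :: "'k poly" where "g = (\<Sum>j<n. monom (v $ j) (q ^ j))"
  have cg: "coeff g i = (\<Sum>j<n. if q ^ j = i then v $ j else 0)" for i
    unfolding g_def by (simp add: coeff_sum coeff_monom)
  have qg: "q_polynomial q g"
    unfolding q_polynomial_def
  proof (intro allI impI)
    fix i assume "coeff g i \<noteq> 0"
    hence "(\<Sum>j<n. if q ^ j = i then v $ j else 0) \<noteq> 0" using cg by simp
    then obtain j where "j \<in> {..<n}" "(if q ^ j = i then v $ j else 0) \<noteq> 0"
      by (rule sum.not_neutral_contains_not_neutral)
    hence "q ^ j = i" by (simp split: if_splits)
    thus "\<exists>k. i = q ^ k" by (intro exI[of _ j]) simp
  qed
  have pg: "poly g x = (\<Sum>j<n. v $ j * x ^ (q ^ j))" for x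
    unfolding g_def by (simp add: poly_sum poly_monom)
  have gb: "poly g (bas i) = 0" if i: "i < n" for i
  proof -
    have "(Mo *\<^sub>v v) $ i = row Mo i \<bullet> v" using i Mo_carrier by simp
    also have "\<dots> = (\<Sum>j = 0..<n. row Mo i $ j * v $ j)" unfolding scalar_prod_def using v(1) by simp
    also have "\<dots> = (\<Sum>j<n. v $ j * bas i ^ (q ^ j))"
      by (rule sum.cong) (use i in \<open>auto simp: Mo_def mult.commute\<close>)
    finally show ?thesis using v(3) i pg by simp
  qed
  have Rsub: "R \<subseteq> {x. poly g x = 0}"
  proof
    fix x assume x: "x \<in> R"
    have "poly g x = poly g (lin n (coord x) bas)" using coord[OF x] by simp
    also have "\<dots> = (\<Sum>i<n. coord x i * poly g (bas i))" by (rule qpoly_lin[OF qg conjunct1[OF coord[OF x]]])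
    also have "\<dots> = 0" using gb by simp
    finally show "x \<in> {x. poly g x = 0}" by simp
  qed
  have "\<exists>j<n. v $ j \<noteq> 0"
  proof (rule ccontr)
    assume "\<not> (\<exists>j<n. v $ j \<noteq> 0)"
    hence "v = 0\<^sub>v n" using v(1) by (intro eq_vecI) auto
    thus False using v(2) by simp
  qed
  then obtain j where j: "j < n" "v $ j \<noteq> 0" by blast
  have "coeff g (q ^ j) = (\<Sum>j'<n. if j' = j then v $ j' else 0)"
    unfolding cg by (rule sum.cong) (auto simp: power_inject_exp[OF q1])
  also have "\<dots> = v $ j" using j(1) by simp
  finally have g0: "g \<noteq> 0" using j(2) by auto
  have dg: "degree g \<le> q ^ (n - 1)"
    unfolding g_def
  proof (rule degree_sum_le)
    fix j assume "j \<in> {..<n}"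
    hence "q ^ j \<le> q ^ (n - 1)" using q2 by (intro power_increasing) auto
    thus "degree (monom (v $ j) (q ^ j)) \<le> q ^ (n - 1)" using degree_monom_le order.trans by blast
  qed simp
  have "q ^ (n - 1) < q ^ n" using n1 q2 by (intro power_strict_increasing) auto
  have "card R \<le> card {x. poly g x = 0}" by (rule card_mono[OF poly_roots_finite[OF g0] Rsub])
  also have "\<dots> \<le> degree g" by (rule card_poly_roots_bound[OF g0])
  finally show False using dg R_card \<open>q ^ (n - 1) < q ^ n\<close> by simp
qed

lemma root_eq:
  assumes x: "x \<in> R"
  shows "x ^ (q ^ n) = - (\<Sum>k<n. \<phi> (coeff L (q ^ k)) * x ^ (q ^ k))"
proof -
  define f where "f i = coeff P i * x ^ i" for i
  have "0 = poly P x" using x unfolding R_def by simp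
  also have "\<dots> = (\<Sum>i\<le>q ^ n. f i)" unfolding f_def poly_altdef degP ..
  also have "\<dots> = (\<Sum>i\<in>(\<lambda>k. q ^ k) ` {..n}. f i)"
  proof (rule sum.mono_neutral_right)
    show "(\<lambda>k. q ^ k) ` {..n} \<subseteq> {..q ^ n}" using q2 by (auto intro: power_increasing)
    show "\<forall>i\<in>{..q ^ n} - (\<lambda>k. q ^ k) ` {..n}. f i = 0"
    proof
      fix i assume i: "i \<in> {..q ^ n} - (\<lambda>k. q ^ k) ` {..n}"
      show "f i = 0"
      proof (rule ccontr)
        assume "f i \<noteq> 0"
        hence "coeff P i \<noteq> 0" unfolding f_def by auto
        then obtain k where k: "i = q ^ k" using qpolP unfolding q_polynomial_def by blast
        hence "k \<le> n" using i power_le_imp_le_exp[OF q1] by auto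
        thus False using i k by auto
      qed
    qed
  qed simp
  also have "\<dots> = (\<Sum>k\<le>n. f (q ^ k))"
    by (rule sum.reindex_cong[of "\<lambda>k. q ^ k"]) (auto simp: inj_on_def power_inject_exp[OF q1])
  also have "\<dots> = (\<Sum>k<n. f (q ^ k)) + f (q ^ n)" by (simp add: lessThan_Suc_atMost[symmetric])
  also have "f (q ^ n) = x ^ (q ^ n)" unfolding f_def using lcP degP by simp
  finally have "0 = (\<Sum>k<n. f (q ^ k)) + x ^ (q ^ n)" .
  moreover have "(\<Sum>k<n. f (q ^ k)) = (\<Sum>k<n. \<phi> (coeff L (q ^ k)) * x ^ (q ^ k))"
    unfolding f_def coeff_P ..
  ultimately show ?thesis by (simp add: eq_neg_iff_add_eq_0 add.commute)
qed

definition Sm :: "'k mat" where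
  "Sm = mat n n (\<lambda>(k, j). if Suc j < n then (if k = Suc j then 1 else 0) else - \<phi> (coeff L (q ^ k)))"

lemma Sm_carrier: "Sm \<in> carrier_mat n n" unfolding Sm_def by simp

lemma frob_Mo: "map_mat (\<lambda>x. x ^ q) Mo = Mo * Sm"
proof (rule eq_matI)
  show "dim_row (map_mat (\<lambda>x. x ^ q) Mo) = dim_row (Mo * Sm)" by (simp add: Mo_def)
  show "dim_col (map_mat (\<lambda>x. x ^ q) Mo) = dim_col (Mo * Sm)" by (simp add: Mo_def Sm_def)
  fix i j assume i: "i < dim_row (Mo * Sm)" and j: "j < dim_col (Mo * Sm)"
  hence i: "i < n" and j: "j < n" by (simp_all add: Mo_def Sm_def)
  have lhs: "map_mat (\<lambda>x. x ^ q) Mo $$ (i, j) = bas i ^ (q ^ Suc j)"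
    using i j by (simp add: Mo_def power_mult[symmetric] mult.commute)
  have rhs: "(Mo * Sm) $$ (i, j) = (\<Sum>k<n. bas i ^ (q ^ k) * Sm $$ (k, j))"
  proof -
    have "(Mo * Sm) $$ (i, j) = row Mo i \<bullet> col Sm j" using i j by (simp add: Mo_def Sm_def)
    also have "\<dots> = (\<Sum>k = 0..<n. row Mo i $ k * col Sm j $ k)" unfolding scalar_prod_def by (simp add: Sm_def)
    also have "\<dots> = (\<Sum>k<n. bas i ^ (q ^ k) * Sm $$ (k, j))"
      by (rule sum.cong) (use i j in \<open>auto simp: Mo_def Sm_def\<close>)
    finally show ?thesis .
  qed
  show "map_mat (\<lambda>x. x ^ q) Mo $$ (i, j) = (Mo * Sm) $$ (i, j)"
  proof (cases "Suc j < n")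
    case True
    have "(\<Sum>k<n. bas i ^ (q ^ k) * Sm $$ (k, j)) = (\<Sum>k<n. if k = Suc j then bas i ^ (q ^ k) else 0)"
      by (rule sum.cong) (use True j in \<open>auto simp: Sm_def\<close>)
    also have "\<dots> = bas i ^ (q ^ Suc j)" using True by simp
    finally show ?thesis using lhs rhs by simp
  next
    case False
    hence jn: "Suc j = n" using j by simp
    have "(\<Sum>k<n. bas i ^ (q ^ k) * Sm $$ (k, j)) = (\<Sum>k<n. - (\<phi> (coeff L (q ^ k)) * bas i ^ (q ^ k)))"
      by (rule sum.cong) (use False j in \<open>auto simp: Sm_def\<close>)
    also have "\<dots> = - (\<Sum>k<n. \<phi> (coeff L (q ^ k)) * bas i ^ (q ^ k))" by (simp add: sum_negf)
    also have "\<dots> = bas i ^ (q ^ n)" using root_eq[of "bas i"] bas(1) i by simp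
    finally show ?thesis using lhs rhs jn by simp
  qed
qed

lemma det_Sm: "det Sm = 1"
proof -
  obtain m where nm: "n = Suc m" using n1 by (cases n) auto
  have mn: "m < n" "\<not> Suc m < n" "n - 1 = m" "n - Suc 0 = m" using nm by auto
  have S0: "Sm $$ (0, j) = 0" if "j < n" "j \<noteq> m" for j
  proof -
    have "Suc j < n" using that nm by simp
    thus ?thesis using that by (simp add: Sm_def)
  qed
  have "det Sm = (\<Sum>j<n. Sm $$ (0, j) * cofactor Sm 0 j)"
    by (rule laplace_expansion_row[OF Sm_carrier]) (use n1 in simp)
  also have "\<dots> = (\<Sum>j<n. if j = m then Sm $$ (0, m) * cofactor Sm 0 m else 0)"
    by (rule sum.cong) (auto simp: S0)
  also have "\<dots> = Sm $$ (0, m) * cofactor Sm 0 m" using mn by simp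
  also have "Sm $$ (0, m) = - ((- 1) ^ n)" using mn c1 by (simp add: Sm_def phi.hom_power phi.hom_uminus)
  also have "mat_delete Sm 0 m = 1\<^sub>m m"
  proof (rule eq_matI)
    fix i j assume "i < dim_row (1\<^sub>m m)" "j < dim_col (1\<^sub>m m)"
    hence ij: "i < m" "j < m" by simp_all
    hence "Suc j < n" "Suc i < n" "j < n" using nm by simp_all
    thus "mat_delete Sm 0 m $$ (i, j) = 1\<^sub>m m $$ (i, j)"
      unfolding mat_delete_def using ij mn by (simp add: Sm_def)
  qed (simp_all add: mat_delete_def Sm_def mn)
  hence "cofactor Sm 0 m = (- 1) ^ m" unfolding cofactor_def by simp
  finally have "det Sm = - ((- 1) ^ n) * (- 1) ^ m" .
  also have "\<dots> = (- 1) ^ (m + m)" unfolding nm by (simp add: power_add)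
  also have "\<dots> = 1" by (simp add: mult_2[symmetric])
  finally show ?thesis .
qed

lemma det_Mo_FK: "det Mo \<in> FK"
proof -
  interpret fr: comm_ring_hom "\<lambda>x::'k. x ^ q"
    by unfold_locales (use q2 frob_q in \<open>auto simp: power_mult_distrib\<close>)
  have "(det Mo) ^ q = det (map_mat (\<lambda>x. x ^ q) Mo)" by (rule fr.hom_det[symmetric])
  also have "\<dots> = det (Mo * Sm)" by (simp add: frob_Mo)
  also have "\<dots> = det Mo * det Sm" by (rule det_mult[OF Mo_carrier Sm_carrier])
  also have "\<dots> = det Mo" by (simp add: det_Sm)
  finally show ?thesis unfolding Fq_set_def by simp
qed

end

context qsetup
begin

definition Am :: "('k \<Rightarrow> 'k) \<Rightarrow> 'k mat" where
  "Am \<sigma> = mat n n (\<lambda>(i, j). coord (\<sigma> (bas j)) i)"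

definition rho :: "('k \<Rightarrow> 'k) \<Rightarrow> 'f mat" where
  "rho \<sigma> = map_mat (inv_into UNIV \<phi>) (Am \<sigma>)"

lemma Am_carrier: "Am \<sigma> \<in> carrier_mat n n" unfolding Am_def by simp

lemma Am_dims[simp]: "dim_row (Am \<sigma>) = n" "dim_col (Am \<sigma>) = n" unfolding Am_def by simp_all

lemma rho_dims[simp]: "dim_row (rho \<sigma>) = n" "dim_col (rho \<sigma>) = n" unfolding rho_def by simp_all

lemma Mo_dims[simp]: "dim_row Mo = n" "dim_col Mo = n" unfolding Mo_def by simp_all

lemma rho_carrier: "rho \<sigma> \<in> carrier_mat n n" unfolding rho_def Am_def by simp

lemma gal_bas: "\<sigma> \<in> galois_group \<phi> \<Longrightarrow> j < n \<Longrightarrow> \<sigma> (bas j) \<in> R"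
  using gal_R bas(1) by blast

lemma Am_FK: "\<sigma> \<in> galois_group \<phi> \<Longrightarrow> i < n \<Longrightarrow> j < n \<Longrightarrow> Am \<sigma> $$ (i, j) \<in> FK"
  unfolding Am_def using coord_FK gal_bas by simp

lemma coord_gal:
  assumes s: "\<sigma> \<in> galois_group \<phi>" and x: "x \<in> R"
  shows "coord (\<sigma> x) = restrict (\<lambda>i. \<Sum>j<n. coord (\<sigma> (bas j)) i * coord x j) {..<n}"
proof (rule coord_unique)
  interpret s: field_hom \<sigma> by (rule gal_hom[OF s])
  let ?c = "coord x" and ?d = "\<lambda>j. coord (\<sigma> (bas j))"
  have cF: "\<And>j. j < n \<Longrightarrow> ?c j \<in> FK" using coord_FK[OF x] .
  show "restrict (\<lambda>i. \<Sum>j<n. ?d j i * ?c j) {..<n} \<in> CV n"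
    using coord_FK gal_bas[OF s] cF by (auto intro!: FK_sum FK_mult)
  have "\<sigma> x = \<sigma> (lin n ?c bas)" using coord[OF x] by simp
  also have "\<dots> = (\<Sum>j<n. \<sigma> (?c j) * \<sigma> (bas j))" unfolding lin_def by (simp add: s.hom_sum s.hom_mult)
  also have "\<dots> = (\<Sum>j<n. ?c j * lin n (?d j) bas)"
    by (rule sum.cong) (use cF gal_fix_FK[OF s] coord gal_bas[OF s] in auto)
  also have "\<dots> = (\<Sum>j<n. \<Sum>i<n. ?c j * (?d j i * bas i))" unfolding lin_def by (simp add: sum_distrib_left)
  also have "\<dots> = (\<Sum>i<n. \<Sum>j<n. ?c j * (?d j i * bas i))" by (rule sum.swap)
  also have "\<dots> = (\<Sum>i<n. \<Sum>j<n. (?d j i * ?c j) * bas i)"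
    by (rule sum.cong[OF refl], rule sum.cong[OF refl]) (simp add: mult_ac)
  also have "\<dots> = (\<Sum>i<n. (\<Sum>j<n. ?d j i * ?c j) * bas i)"
    by (simp add: sum_distrib_right)
  also have "\<dots> = lin n (restrict (\<lambda>i. \<Sum>j<n. ?d j i * ?c j) {..<n}) bas"
    unfolding lin_def by (rule sum.cong) auto
  finally show "lin n (restrict (\<lambda>i. \<Sum>j<n. ?d j i * ?c j) {..<n}) bas = \<sigma> x" by simp
qed

lemma map_rho:
  assumes s: "\<sigma> \<in> galois_group \<phi>"
  shows "map_mat \<phi> (rho \<sigma>) = Am \<sigma>"
proof (rule eq_matI)
  fix i j assume "i < dim_row (Am \<sigma>)" "j < dim_col (Am \<sigma>)"
  hence ij: "i < n" "j < n" by auto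
  show "map_mat \<phi> (rho \<sigma>) $$ (i, j) = Am \<sigma> $$ (i, j)"
    using FK_pre[OF Am_FK[OF s ij]] ij by (simp add: rho_def)
qed simp_all

lemma gal_comp: "\<sigma> \<in> galois_group \<phi> \<Longrightarrow> \<tau> \<in> galois_group \<phi> \<Longrightarrow> \<sigma> \<circ> \<tau> \<in> galois_group \<phi>"
  unfolding galois_group_def ring_hom_fun_def by (auto intro: bij_comp)

lemma Am_comp:
  assumes s: "\<sigma> \<in> galois_group \<phi>" and t: "\<tau> \<in> galois_group \<phi>"
  shows "Am (\<sigma> \<circ> \<tau>) = Am \<sigma> * Am \<tau>"
proof (rule eq_matI)
  fix i j assume "i < dim_row (Am \<sigma> * Am \<tau>)" "j < dim_col (Am \<sigma> * Am \<tau>)"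
  hence i: "i < n" and j: "j < n" by auto
  have "Am (\<sigma> \<circ> \<tau>) $$ (i, j) = coord (\<sigma> (\<tau> (bas j))) i" unfolding Am_def using i j by simp
  also have "\<dots> = (\<Sum>k<n. coord (\<sigma> (bas k)) i * coord (\<tau> (bas j)) k)"
    using coord_gal[OF s gal_bas[OF t j]] i by simp
  also have "\<dots> = (\<Sum>k = 0..<n. Am \<sigma> $$ (i, k) * Am \<tau> $$ (k, j))"
    unfolding Am_def using i j by (intro sum.cong) auto
  also have "\<dots> = (Am \<sigma> * Am \<tau>) $$ (i, j)"
    using i j Am_carrier by (simp add: scalar_prod_def)
  finally show "Am (\<sigma> \<circ> \<tau>) $$ (i, j) = (Am \<sigma> * Am \<tau>) $$ (i, j)" .
qed (use Am_carrier in auto)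

lemma map_mat_phi_inj:
  assumes "A \<in> carrier_mat n n" "B \<in> carrier_mat n n" "map_mat \<phi> A = map_mat \<phi> B"
  shows "A = B"
proof (rule eq_matI)
  fix i j assume "i < dim_row B" "j < dim_col B"
  hence "map_mat \<phi> A $$ (i, j) = map_mat \<phi> B $$ (i, j)" using assms(3) by simp
  thus "A $$ (i, j) = B $$ (i, j)" using assms(1,2) \<open>i < dim_row B\<close> \<open>j < dim_col B\<close> by simp
qed (use assms in auto)

lemma rho_comp:
  assumes s: "\<sigma> \<in> galois_group \<phi>" and t: "\<tau> \<in> galois_group \<phi>"
  shows "rho (\<sigma> \<circ> \<tau>) = rho \<sigma> * rho \<tau>"
proof (rule map_mat_phi_inj)
  show "rho (\<sigma> \<circ> \<tau>) \<in> carrier_mat n n" by (rule rho_carrier)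
  show "rho \<sigma> * rho \<tau> \<in> carrier_mat n n" using rho_carrier by (meson mult_carrier_mat)
  have "map_mat \<phi> (rho \<sigma> * rho \<tau>) = map_mat \<phi> (rho \<sigma>) * map_mat \<phi> (rho \<tau>)"
    by (rule phi.mat_hom_mult[OF rho_carrier rho_carrier])
  also have "\<dots> = Am (\<sigma> \<circ> \<tau>)" using map_rho[OF s] map_rho[OF t] Am_comp[OF s t] by simp
  also have "\<dots> = map_mat \<phi> (rho (\<sigma> \<circ> \<tau>))" using map_rho[OF gal_comp[OF s t]] by simp
  finally show "map_mat \<phi> (rho (\<sigma> \<circ> \<tau>)) = map_mat \<phi> (rho \<sigma> * rho \<tau>)" by simp
qed

lemma Am_det:
  assumes s: "\<sigma> \<in> galois_group \<phi>"
  shows "det (Am \<sigma>) = 1"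
proof -
  interpret s: field_hom \<sigma> by (rule gal_hom[OF s])
  have eq: "map_mat \<sigma> Mo = transpose_mat (Am \<sigma>) * Mo"
  proof (rule eq_matI)
    fix i j assume "i < dim_row (transpose_mat (Am \<sigma>) * Mo)" "j < dim_col (transpose_mat (Am \<sigma>) * Mo)"
    hence i: "i < n" and j: "j < n" by auto
    let ?d = "coord (\<sigma> (bas i))"
    have dF: "\<And>k. k < n \<Longrightarrow> ?d k \<in> FK" using coord_FK gal_bas[OF s i] by blast
    have "map_mat \<sigma> Mo $$ (i, j) = (\<sigma> (bas i)) ^ (q ^ j)" using i j Mo_carrier by (simp add: Mo_def s.hom_power)
    also have "\<sigma> (bas i) = lin n ?d bas" using coord[OF gal_bas[OF s i]] by simp
    also have "(lin n ?d bas) ^ (q ^ j) = (\<Sum>k<n. ?d k * bas k ^ (q ^ j))"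
      unfolding lin_def frob_sum by (rule sum.cong) (auto simp: power_mult_distrib FK_pow dF)
    also have "\<dots> = (\<Sum>k = 0..<n. transpose_mat (Am \<sigma>) $$ (i, k) * Mo $$ (k, j))"
      using i j by (intro sum.cong) (auto simp: Am_def Mo_def)
    also have "\<dots> = (transpose_mat (Am \<sigma>) * Mo) $$ (i, j)"
      using i j Am_carrier Mo_carrier by (simp add: scalar_prod_def)
    finally show "map_mat \<sigma> Mo $$ (i, j) = (transpose_mat (Am \<sigma>) * Mo) $$ (i, j)" .
  qed (use Am_carrier Mo_carrier in auto)
  have "det Mo = \<sigma> (det Mo)" using gal_fix_FK[OF s det_Mo_FK] by simp
  also have "\<dots> = det (map_mat \<sigma> Mo)" by simp
  also have "\<dots> = det (transpose_mat (Am \<sigma>)) * det Mo"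
    unfolding eq by (rule det_mult[OF _ Mo_carrier]) (simp add: Am_carrier)
  also have "det (transpose_mat (Am \<sigma>)) = det (Am \<sigma>)" by (rule det_transpose[OF Am_carrier])
  finally have "det Mo * 1 = det Mo * det (Am \<sigma>)" by (simp add: mult.commute)
  thus ?thesis using Mo_det_nz by simp
qed

lemma rho_SL: "\<sigma> \<in> galois_group \<phi> \<Longrightarrow> rho \<sigma> \<in> SL_mats n q"
proof -
  assume s: "\<sigma> \<in> galois_group \<phi>"
  have "\<phi> (det (rho \<sigma>)) = det (map_mat \<phi> (rho \<sigma>))" by simp
  also have "\<dots> = 1" using map_rho[OF s] Am_det[OF s] by simp
  finally have "det (rho \<sigma>) = 1" by simp
  moreover have "\<forall>i<n. \<forall>j<n. rho \<sigma> $$ (i, j) \<in> Fq_set q"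
    using Am_FK[OF s] FK_pre by (auto simp: rho_def)
  ultimately show ?thesis unfolding SL_mats_def using rho_carrier by blast
qed

lemma gal_eq_on_R:
  assumes s: "\<sigma> \<in> galois_group \<phi>" and t: "\<tau> \<in> galois_group \<phi>" and R: "\<forall>x\<in>R. \<sigma> x = \<tau> x"
  shows "\<sigma> = \<tau>"
proof -
  interpret s: field_hom \<sigma> by (rule gal_hom[OF s])
  interpret t: field_hom \<tau> by (rule gal_hom[OF t])
  define S where "S = {x. \<sigma> x = \<tau> x}"
  have "is_subfield S" unfolding is_subfield_def S_def
    by (auto simp: s.hom_add t.hom_add s.hom_mult t.hom_mult s.hom_uminus t.hom_uminus
        s.hom_inverse t.hom_inverse)
  moreover have "range \<phi> \<subseteq> S" using s t unfolding S_def galois_group_def by auto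
  moreover have "R \<subseteq> S" using R unfolding S_def by auto
  ultimately have "S = UNIV" by (rule splitting_univ)
  thus ?thesis unfolding S_def by auto
qed

lemma rho_inj: "inj_on rho (galois_group \<phi>)"
proof (rule inj_onI)
  fix \<sigma> \<tau> assume s: "\<sigma> \<in> galois_group \<phi>" and t: "\<tau> \<in> galois_group \<phi>" and eq: "rho \<sigma> = rho \<tau>"
  have A: "Am \<sigma> = Am \<tau>" using map_rho[OF s] map_rho[OF t] eq by simp
  have cb: "coord (\<sigma> (bas j)) = coord (\<tau> (bas j))" if j: "j < n" for j
  proof
    fix i
    show "coord (\<sigma> (bas j)) i = coord (\<tau> (bas j)) i"
    proof (cases "i < n")
      case True
      have "Am \<sigma> $$ (i, j) = Am \<tau> $$ (i, j)" using A by simp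
      thus ?thesis using True j by (simp add: Am_def)
    next
      case False
      have m1: "coord (\<sigma> (bas j)) \<in> CV n" using coord[OF gal_bas[OF s j]] by (rule conjunct1)
      have m2: "coord (\<tau> (bas j)) \<in> CV n" using coord[OF gal_bas[OF t j]] by (rule conjunct1)
      show ?thesis using PiE_arb[OF m1, of i] PiE_arb[OF m2, of i] False by simp
    qed
  qed
  have "\<forall>x\<in>R. \<sigma> x = \<tau> x"
  proof
    fix x assume x: "x \<in> R"
    have eqc: "coord (\<sigma> x) = coord (\<tau> x)" unfolding coord_gal[OF s x] coord_gal[OF t x]
      by (rule restrict_ext, rule sum.cong[OF refl]) (simp add: cb)
    have c1: "lin n (coord (\<sigma> x)) bas = \<sigma> x" using coord[OF gal_R[OF s x]] by (rule conjunct2)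
    have c2: "lin n (coord (\<tau> x)) bas = \<tau> x" using coord[OF gal_R[OF t x]] by (rule conjunct2)
    show "\<sigma> x = \<tau> x" using c1 c2 eqc by metis
  qed
  thus "\<sigma> = \<tau>" by (rule gal_eq_on_R[OF s t])
qed

lemma vec_elem:
  assumes u: "u \<in> nonzero_Fq_vecs n q"
  shows "restrict (\<lambda>i. \<phi> (u $ i)) {..<n} \<in> CV n" and "lin n (restrict (\<lambda>i. \<phi> (u $ i)) {..<n}) bas \<in> R"
    and "lin n (restrict (\<lambda>i. \<phi> (u $ i)) {..<n}) bas \<noteq> 0"
proof -
  have uF: "\<And>i. i < n \<Longrightarrow> u $ i \<in> Fq_set q" and uc: "u \<in> carrier_vec n" and u0: "u \<noteq> 0\<^sub>v n"
    using u unfolding nonzero_Fq_vecs_def by auto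
  have "\<phi> (u $ i) \<in> FK" if "i < n" for i using FK_image uF[OF that] by blast
  thus cu: "restrict (\<lambda>i. \<phi> (u $ i)) {..<n} \<in> CV n" unfolding restrict_PiE_iff by blast
  show "lin n (restrict (\<lambda>i. \<phi> (u $ i)) {..<n}) bas \<in> R" by (rule lin_R[OF _ cu]) (use bas(1) in auto)
  show "lin n (restrict (\<lambda>i. \<phi> (u $ i)) {..<n}) bas \<noteq> 0"
  proof
    assume eq0: "lin n (restrict (\<lambda>i. \<phi> (u $ i)) {..<n}) bas = 0"
    let ?z = "restrict (\<lambda>i. 0::'k) {..<n}"
    have z: "?z \<in> CV n" by auto
    have "lin n ?z bas = 0" unfolding lin_def by simp
    hence "lin n (restrict (\<lambda>i. \<phi> (u $ i)) {..<n}) bas = lin n ?z bas" using eq0 by simp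
    hence "restrict (\<lambda>i. \<phi> (u $ i)) {..<n} = ?z" by (rule inj_onD[OF bas(2) _ cu z])
    have "u $ i = 0" if i: "i < n" for i
      using fun_cong[OF \<open>restrict (\<lambda>i. \<phi> (u $ i)) {..<n} = ?z\<close>, of i] i by simp
    hence "\<And>i. i < n \<Longrightarrow> u $ i = 0" by blast
    hence "u = 0\<^sub>v n" using uc by (intro eq_vecI) auto
    thus False using u0 by simp
  qed
qed

lemma rho_trans:
  assumes u: "u \<in> nonzero_Fq_vecs n q" and v: "v \<in> nonzero_Fq_vecs n q"
  shows "\<exists>\<sigma>\<in>galois_group \<phi>. rho \<sigma> *\<^sub>v u = v"
proof -
  let ?cu = "restrict (\<lambda>i. \<phi> (u $ i)) {..<n}" and ?cv = "restrict (\<lambda>i. \<phi> (v $ i)) {..<n}"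
  obtain \<sigma> where s: "\<sigma> \<in> galois_group \<phi>" and sxy: "\<sigma> (lin n ?cu bas) = lin n ?cv bas"
    using transitive[OF vec_elem(2,3)[OF u] vec_elem(2,3)[OF v]] by blast
  have hcv: "coord (\<sigma> (lin n ?cu bas)) = ?cv" unfolding sxy by (rule coord_unique[OF vec_elem(1)[OF v]]) simp
  have hcu: "coord (lin n ?cu bas) = ?cu" by (rule coord_unique[OF vec_elem(1)[OF u]]) simp
  have key: "(\<Sum>j<n. coord (\<sigma> (bas j)) i * \<phi> (u $ j)) = \<phi> (v $ i)" if i: "i < n" for i
  proof -
    have "?cv i = restrict (\<lambda>i. \<Sum>j<n. coord (\<sigma> (bas j)) i * ?cu j) {..<n} i"
      using coord_gal[OF s vec_elem(2)[OF u]] hcv hcu by simp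
    also have "\<dots> = (\<Sum>j<n. coord (\<sigma> (bas j)) i * \<phi> (u $ j))" using i by simp
    finally show ?thesis using i by simp
  qed
  have uc: "u \<in> carrier_vec n" and vc: "v \<in> carrier_vec n"
    using u v unfolding nonzero_Fq_vecs_def by auto
  have "map_vec \<phi> (rho \<sigma> *\<^sub>v u) = map_mat \<phi> (rho \<sigma>) *\<^sub>v map_vec \<phi> u"
    by (rule phi.mult_mat_vec_hom[OF rho_carrier uc])
  also have "\<dots> = Am \<sigma> *\<^sub>v map_vec \<phi> u" using map_rho[OF s] by simp
  also have "\<dots> = map_vec \<phi> v"
  proof (rule eq_vecI)
    fix i assume "i < dim_vec (map_vec \<phi> v)"
    hence i: "i < n" using vc by simp
    have "(Am \<sigma> *\<^sub>v map_vec \<phi> u) $ i = (\<Sum>j = 0..<n. Am \<sigma> $$ (i, j) * \<phi> (u $ j))"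
      using i uc Am_carrier by (simp add: scalar_prod_def)
    also have "\<dots> = (\<Sum>j<n. coord (\<sigma> (bas j)) i * \<phi> (u $ j))"
      using i by (intro sum.cong) (auto simp: Am_def)
    also have "\<dots> = map_vec \<phi> v $ i" using key[OF i] i vc by simp
    finally show "(Am \<sigma> *\<^sub>v map_vec \<phi> u) $ i = map_vec \<phi> v $ i" .
  qed (use vc Am_carrier in auto)
  finally have "map_vec \<phi> (rho \<sigma> *\<^sub>v u) = map_vec \<phi> v" .
  hence rv: "rho \<sigma> *\<^sub>v u = v"
  proof -
    assume h: "map_vec \<phi> (rho \<sigma> *\<^sub>v u) = map_vec \<phi> v"
    show ?thesis
    proof (rule eq_vecI)
      fix i assume "i < dim_vec v"
      hence "map_vec \<phi> (rho \<sigma> *\<^sub>v u) $ i = map_vec \<phi> v $ i" using h by simp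
      thus "(rho \<sigma> *\<^sub>v u) $ i = v $ i" using \<open>i < dim_vec v\<close> vc rho_carrier by simp
    qed (use vc rho_carrier in auto)
  qed
  show ?thesis
  proof (rule bexI[of _ \<sigma>])
    show "rho \<sigma> *\<^sub>v u = v" by (rule rv)
    show "\<sigma> \<in> galois_group \<phi>" by (rule s)
  qed
qed

end

theorem theorem3p1:
  fixes p q n :: nat and L :: "'f::field poly" and \<phi> :: "'f \<Rightarrow> 'k::field"
  assumes "prime p"
    and "\<exists>k\<ge>1. q = p ^ k"
    and "CHAR('f) = p"
    and "card (Fq_set q :: 'f set) = q"
    and "q_polynomial q L"
    and "n \<ge> 1"
    and "degree L = q ^ n"
    and "lead_coeff L = 1"
    and "irreducible (L div [:0, 1:])"
    and "coeff L 1 = (- 1) ^ n"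
    and "splitting_field \<phi> L"
  shows "\<exists>\<rho> :: ('k \<Rightarrow> 'k) \<Rightarrow> 'f mat.
           (\<forall>\<sigma>\<in>galois_group \<phi>. \<rho> \<sigma> \<in> SL_mats n q) \<and>
           (\<forall>\<sigma>\<in>galois_group \<phi>. \<forall>\<tau>\<in>galois_group \<phi>. \<rho> (\<sigma> \<circ> \<tau>) = \<rho> \<sigma> * \<rho> \<tau>) \<and>
           inj_on \<rho> (galois_group \<phi>) \<and>
           (\<forall>u\<in>nonzero_Fq_vecs n q. \<forall>v\<in>nonzero_Fq_vecs n q.
              \<exists>\<sigma>\<in>galois_group \<phi>. \<rho> \<sigma> *\<^sub>v u = v)"
  proof -
  interpret qsetup p q n L \<phi> by (rule qsetup.intro) (rule assms)+
  have A: "\<forall>\<sigma>\<in>galois_group \<phi>. rho \<sigma> \<in> SL_mats n q" using rho_SL by blast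
  have B: "\<forall>\<sigma>\<in>galois_group \<phi>. \<forall>\<tau>\<in>galois_group \<phi>. rho (\<sigma> \<circ> \<tau>) = rho \<sigma> * rho \<tau>"
    using rho_comp by blast
  have C: "inj_on rho (galois_group \<phi>)" by (rule rho_inj)
  have D: "\<forall>u\<in>nonzero_Fq_vecs n q. \<forall>v\<in>nonzero_Fq_vecs n q. \<exists>\<sigma>\<in>galois_group \<phi>. rho \<sigma> *\<^sub>v u = v"
    using rho_trans by blast
  show ?thesis using A B C D by (intro exI[of _ rho] conjI)
qed

end
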